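(* Let $V$ be an $n$-dimensional vector space over a field $\mathbb{F}$, and let $k<n/2$. If $L$ is a subspace of $\bigwedge^{k}V$ such that $x\wedge y=0$ for all $x,y\in L$ and $\dim L=\binom{n-1}{k-1}$, then there is a nonzero $v\in V=\bigwedge^{1}V$ such that $v\wedge x=0$ for all $x\in L$.
   Context: $\bigwedge V$ denotes the exterior algebra of $V$ and $\bigwedge^{k}V$ its degree-$k$ component. The paper assumes throughout, for expository purposes, that the characteristic of $\mathbb{F}$ is not $2$. *)

theory Defs
  imports Main "HOL-Library.Function_Algebras" HOL.Vector_Spaces
begin

text \<open>Concrete model of the exterior algebra of V = F^n with basis e_0, ..., e_(n-1).
  An element of the exterior algebra is a coefficient function on finite subsets
  S of {0..<n}: x S is the coefficient of e_(s1) wedge ... wedge e_(sj), where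
  s1 < ... < sj enumerate S.\<close>

definition fscale :: "'a::field \<Rightarrow> ('b \<Rightarrow> 'a) \<Rightarrow> ('b \<Rightarrow> 'a)" where
  "fscale c x = (\<lambda>S. c * x S)"

interpretation fvs: vector_space "fscale :: 'a::field \<Rightarrow> ('b \<Rightarrow> 'a) \<Rightarrow> ('b \<Rightarrow> 'a)"
  by unfold_locales (auto simp: fscale_def fun_eq_iff algebra_simps)

definition extpow :: "nat \<Rightarrow> nat \<Rightarrow> (nat set \<Rightarrow> 'a::field) set" where
  "extpow n k = {x. \<forall>S. x S \<noteq> 0 \<longrightarrow> S \<subseteq> {..<n} \<and> card S = k}"

text \<open>Sign of the permutation sorting the concatenation of sorted A and sorted B.\<close>
definition shuffle_sign :: "nat set \<Rightarrow> nat set \<Rightarrow> 'a::field" where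
  "shuffle_sign A B = (-1) ^ card {(a, b). a \<in> A \<and> b \<in> B \<and> b < a}"

definition wedge :: "(nat set \<Rightarrow> 'a::field) \<Rightarrow> (nat set \<Rightarrow> 'a) \<Rightarrow> (nat set \<Rightarrow> 'a)" where
  "wedge x y = (\<lambda>S. if finite S then (\<Sum>A \<in> Pow S. shuffle_sign A (S - A) * x A * y (S - A)) else 0)"

end

theory Submission
  imports Defs
begin

definition KS :: "nat set \<Rightarrow> nat \<Rightarrow> nat set set" where
  "KS Y r = {B. B \<subseteq> Y \<and> card B = r}"

definition intersecting :: "nat set set \<Rightarrow> bool" where
  "intersecting F = (\<forall>A\<in>F. \<forall>B\<in>F. A \<inter> B \<noteq> {})"

lemma finite_KS: "finite Y \<Longrightarrow> finite (KS Y r)"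
  unfolding KS_def by (rule finite_subset[of _ "Pow Y"]) auto

lemma card_KS: "finite Y \<Longrightarrow> card (KS Y r) = card Y choose r"
  unfolding KS_def by (rule n_subsets)

lemma card_KS_star:
  assumes "finite Y" "c \<in> Y" "1 \<le> r"
  shows "card {B \<in> KS Y r. c \<in> B} = (card Y - 1) choose (r - 1)"
proof -
  have "bij_betw (\<lambda>B. B - {c}) {B \<in> KS Y r. c \<in> B} (KS (Y - {c}) (r - 1))"
  proof (rule bij_betw_imageI)
    show "inj_on (\<lambda>B. B - {c}) {B \<in> KS Y r. c \<in> B}"
      by (rule inj_onI) (metis (no_types, lifting) insert_Diff mem_Collect_eq)
    show "(\<lambda>B. B - {c}) ` {B \<in> KS Y r. c \<in> B} = KS (Y - {c}) (r - 1)"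
    proof
      show "(\<lambda>B. B - {c}) ` {B \<in> KS Y r. c \<in> B} \<subseteq> KS (Y - {c}) (r - 1)"
        unfolding KS_def by auto
      show "KS (Y - {c}) (r - 1) \<subseteq> (\<lambda>B. B - {c}) ` {B \<in> KS Y r. c \<in> B}"
      proof
        fix X assume X: "X \<in> KS (Y - {c}) (r - 1)"
        hence fX: "finite X" using assms(1) unfolding KS_def by (auto intro: finite_subset)
        have cX: "c \<notin> X" "X \<subseteq> Y" "card X = r - 1" using X unfolding KS_def by auto
        hence "card (insert c X) = r" using fX assms(3) by simp
        hence "insert c X \<in> {B \<in> KS Y r. c \<in> B}"
          using cX assms unfolding KS_def by auto
        moreover have "X = insert c X - {c}" using X unfolding KS_def by auto
        ultimately show "X \<in> (\<lambda>B. B - {c}) ` {B \<in> KS Y r. c \<in> B}" by blast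
      qed
    qed
  qed
  hence "card {B \<in> KS Y r. c \<in> B} = card (KS (Y - {c}) (r - 1))"
    by (rule bij_betw_same_card)
  also have "\<dots> = (card Y - 1) choose (r - 1)"
    using assms by (simp add: card_KS)
  finally show ?thesis .
qed

lemma intersecting_empty: "intersecting F \<Longrightarrow> {} \<notin> F"
  unfolding intersecting_def by auto

lemma kneser_swap:
  assumes fY: "finite Y" and r: "2 * r < card Y" and Q: "Q \<subseteq> KS Y r"
    and cl: "\<And>X X'. X \<in> Q \<Longrightarrow> X' \<in> KS Y r \<Longrightarrow> X \<inter> X' = {} \<Longrightarrow> X' \<in> Q"
    and X: "X \<in> Q" and x: "x \<in> X" and y: "y \<in> Y" "y \<notin> X"
  shows "insert y (X - {x}) \<in> Q"
proof -
  have XY: "X \<subseteq> Y" "card X = r" using X Q unfolding KS_def by auto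
  have fX: "finite X" using XY fY by (auto intro: finite_subset)
  have "card (insert y X) = Suc r" using XY fX y by simp
  moreover have "insert y X \<subseteq> Y" using XY y by auto
  ultimately have "card (Y - insert y X) = card Y - Suc r"
    using fY by (simp add: card_Diff_subset fX)
  hence "r \<le> card (Y - insert y X)" using r by simp
  then obtain D where D: "D \<subseteq> Y - insert y X" "card D = r"
    by (meson obtain_subset_with_card_n)
  have "D \<in> KS Y r" using D unfolding KS_def by auto
  moreover have "X \<inter> D = {}" using D by auto
  ultimately have DQ: "D \<in> Q" using cl X by blast
  have "card X > 0" using fX x by (auto simp: card_gt_0_iff)
  hence "card (insert y (X - {x})) = r" using XY fX x y by (simp add: card_insert_if)
  hence "insert y (X - {x}) \<in> KS Y r"
    using XY x y unfolding KS_def by auto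
  moreover have "D \<inter> insert y (X - {x}) = {}" using D by auto
  ultimately show ?thesis using cl DQ by blast
qed

lemma kneser_conn:
  assumes fY: "finite Y" and r: "2 * r < card Y" and Q: "Q \<subseteq> KS Y r"
    and cl: "\<And>X X'. X \<in> Q \<Longrightarrow> X' \<in> KS Y r \<Longrightarrow> X \<inter> X' = {} \<Longrightarrow> X' \<in> Q"
    and X0: "X0 \<in> Q"
  shows "KS Y r \<subseteq> Q"
proof
  fix X' assume X': "X' \<in> KS Y r"
  have "\<And>X. X \<in> Q \<Longrightarrow> card (X' - X) = d \<Longrightarrow> X' \<in> Q" for d
  proof (induction d)
    case 0
    have "X \<subseteq> Y" "card X = r" using 0 Q unfolding KS_def by auto
    moreover have "X' \<subseteq> Y" "card X' = r" using X' unfolding KS_def by auto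
    moreover have "finite X'" "finite X" using calculation fY by (auto intro: finite_subset)
    ultimately have "X' \<subseteq> X" using 0 by auto
    hence "X' = X" using \<open>finite X\<close> \<open>card X = r\<close> \<open>card X' = r\<close> by (simp add: card_subset_eq)
    thus ?case using 0 by simp
  next
    case (Suc d)
    have XY: "X \<subseteq> Y" "card X = r" using Suc Q unfolding KS_def by auto
    have X'Y: "X' \<subseteq> Y" "card X' = r" using X' unfolding KS_def by auto
    have fin: "finite X" "finite X'" using XY X'Y fY by (auto intro: finite_subset)
    obtain y where y: "y \<in> X'" "y \<notin> X" using Suc.prems(2)
      by (metis Diff_eq_empty_iff card.empty nat.distinct(1) subsetI)
    have "X - X' \<noteq> {}"
    proof
      assume "X - X' = {}"
      hence "X \<subseteq> X'" by auto
      hence "X = X'" using fin XY X'Y by (simp add: card_subset_eq)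
      thus False using y by simp
    qed
    then obtain x where x: "x \<in> X" "x \<notin> X'" by auto
    have newQ: "insert y (X - {x}) \<in> Q"
      using kneser_swap[OF fY r Q cl Suc.prems(1) x(1)] y X'Y by auto
    have "X' - insert y (X - {x}) = (X' - X) - {y}" using x y by auto
    hence "card (X' - insert y (X - {x})) = d"
      using Suc.prems(2) y fin by (simp add: card_Diff_singleton)
    thus ?case using Suc.IH newQ by blast
  qed
  thus "X' \<in> Q" using X0 by blast
qed

definition cmv :: "nat \<Rightarrow> nat \<Rightarrow> nat set set \<Rightarrow> nat set \<Rightarrow> nat set" where
  "cmv i j F A = (if j \<in> A \<and> i \<notin> A \<and> insert i (A - {j}) \<notin> F then insert i (A - {j}) else A)"

definition cmp :: "nat \<Rightarrow> nat \<Rightarrow> nat set set \<Rightarrow> nat set set" where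
  "cmp i j F = cmv i j F ` F"

lemma cmv_inj: "i \<noteq> j \<Longrightarrow> inj_on (cmv i j F) F"
proof (rule inj_onI)
  fix A B assume ij: "i \<noteq> j" and A: "A \<in> F" and B: "B \<in> F" and eq: "cmv i j F A = cmv i j F B"
  show "A = B"
  proof (cases "j \<in> A \<and> i \<notin> A \<and> insert i (A - {j}) \<notin> F")
    case TA: True
    show ?thesis
    proof (cases "j \<in> B \<and> i \<notin> B \<and> insert i (B - {j}) \<notin> F")
      case True
      hence "insert i (A - {j}) = insert i (B - {j})" using TA eq unfolding cmv_def by simp
      hence "A - {j} = B - {j}" using TA True
        by (metis Diff_iff insert_Diff1 insert_absorb insert_ident singletonD)
      thus ?thesis using TA True by (metis insert_Diff)
    next
      case False
      hence "cmv i j F B = B" unfolding cmv_def by auto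
      moreover have "cmv i j F A = insert i (A - {j})" using TA unfolding cmv_def by auto
      ultimately have "insert i (A - {j}) = B" using eq by simp
      thus ?thesis using TA B by simp
    qed
  next
    case FA: False
    show ?thesis
    proof (cases "j \<in> B \<and> i \<notin> B \<and> insert i (B - {j}) \<notin> F")
      case True
      hence "cmv i j F B = insert i (B - {j})" unfolding cmv_def by auto
      moreover have "cmv i j F A = A" using FA unfolding cmv_def by auto
      ultimately have "insert i (B - {j}) = A" using eq by simp
      thus ?thesis using True A by simp
    next
      case False
      hence "cmv i j F B = B" unfolding cmv_def by auto
      moreover have "cmv i j F A = A" using FA unfolding cmv_def by auto
      ultimately show ?thesis using eq by simp
    qed
  qed
qed

lemma card_comp: "i \<noteq> j \<Longrightarrow> card (cmp i j F) = card F"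
  unfolding cmp_def by (rule card_image[OF cmv_inj])

lemma comp_KS:
  assumes "F \<subseteq> KS Y k" "i \<in> Y" "finite Y" shows "cmp i j F \<subseteq> KS Y k"
proof
  fix C assume "C \<in> cmp i j F"
  then obtain A where A: "A \<in> F" "C = cmv i j F A" unfolding cmp_def by auto
  have AY: "A \<subseteq> Y" "card A = k" using A assms unfolding KS_def by auto
  show "C \<in> KS Y k"
  proof (cases "j \<in> A \<and> i \<notin> A \<and> insert i (A - {j}) \<notin> F")
    case True
    have fA: "finite A" using AY assms(3) by (auto intro: finite_subset)
    have "card (insert i (A - {j})) = card A" using True fA
      by (simp add: card_Diff_singleton) (metis card_Diff1_less card_gt_0_iff emptyE Suc_pred)
    thus ?thesis using A AY True assms(2) unfolding cmv_def KS_def by auto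
  next
    case False thus ?thesis using A AY unfolding cmv_def KS_def by auto
  qed
qed

lemma comp_intersecting:
  assumes I: "intersecting F" shows "intersecting (cmp i j F)"
  unfolding intersecting_def
proof (intro ballI)
  have key: "cmv i j F A \<inter> cmv i j F B \<noteq> {}" if A: "A \<in> F" and B: "B \<in> F"
     and mA: "j \<in> A \<and> i \<notin> A \<and> insert i (A - {j}) \<notin> F"
     and mB: "\<not> (j \<in> B \<and> i \<notin> B \<and> insert i (B - {j}) \<notin> F)" for A B
  proof
    assume E: "cmv i j F A \<inter> cmv i j F B = {}"
    hence E': "insert i (A - {j}) \<inter> B = {}" using mA mB unfolding cmv_def by simp
    have "A \<inter> B \<noteq> {}" using I A B unfolding intersecting_def by auto
    hence jB: "j \<in> B" using E' by auto
    have iB: "i \<notin> B" using E' by auto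
    hence B': "insert i (B - {j}) \<in> F" using mB jB by auto
    have "A \<inter> insert i (B - {j}) \<noteq> {}" using I A B' unfolding intersecting_def by blast
    thus False using E' mA by auto
  qed
  fix C D assume C: "C \<in> cmp i j F" and D: "D \<in> cmp i j F"
  then obtain A B where A: "A \<in> F" "C = cmv i j F A" and B: "B \<in> F" "D = cmv i j F B"
    unfolding cmp_def by auto
  show "C \<inter> D \<noteq> {}"
  proof (cases "j \<in> A \<and> i \<notin> A \<and> insert i (A - {j}) \<notin> F")
    case mA: True
    show ?thesis
    proof (cases "j \<in> B \<and> i \<notin> B \<and> insert i (B - {j}) \<notin> F")
      case True thus ?thesis using A B mA unfolding cmv_def by auto
    next
      case False thus ?thesis using key[OF A(1) B(1) mA False] A B by simp
    qed
  next
    case mA: False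
    show ?thesis
    proof (cases "j \<in> B \<and> i \<notin> B \<and> insert i (B - {j}) \<notin> F")
      case True thus ?thesis using key[OF B(1) A(1) True mA] A B by (simp add: Int_commute)
    next
      case False thus ?thesis using A B mA I unfolding cmv_def intersecting_def by auto
    qed
  qed
qed

definition wF :: "nat set set \<Rightarrow> nat" where
  "wF F = (\<Sum>A\<in>F. \<Sum>A)"

definition shifted :: "nat set set \<Rightarrow> bool" where
  "shifted F = (\<forall>A\<in>F. \<forall>i j. i < j \<longrightarrow> j \<in> A \<longrightarrow> i \<notin> A \<longrightarrow> insert i (A - {j}) \<in> F)"

lemma wF_comp:
  assumes fF: "finite F" and fin: "\<forall>A\<in>F. finite A" and ij: "i < j"
    and A: "A \<in> F" "j \<in> A" "i \<notin> A" "insert i (A - {j}) \<notin> F"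
  shows "wF (cmp i j F) < wF F"
proof -
  have "wF (cmp i j F) = (\<Sum>A\<in>F. \<Sum>(cmv i j F A))"
    unfolding wF_def cmp_def using ij by (subst sum.reindex[OF cmv_inj]) auto
  also have "\<dots> < (\<Sum>A\<in>F. \<Sum>A)"
  proof (rule sum_strict_mono_ex1[OF fF])
    have "\<Sum>(insert i (B - {j})) < \<Sum>B" if "B \<in> F" "j \<in> B" "i \<notin> B" for B
    proof -
      have fB: "finite B" using fin that by auto
      have "\<Sum>(insert i (B - {j})) = i + \<Sum>(B - {j})" using fB that by simp
      moreover have "\<Sum>B = j + \<Sum>(B - {j})" using fB that by (simp add: sum.remove)
      ultimately show ?thesis using ij by simp
    qed
    thus "\<forall>x\<in>F. \<Sum>(cmv i j F x) \<le> \<Sum>x" unfolding cmv_def by (auto simp: less_imp_le)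
    show "\<exists>a\<in>F. \<Sum>(cmv i j F a) < \<Sum>a"
      using A \<open>\<And>B. B \<in> F \<Longrightarrow> j \<in> B \<Longrightarrow> i \<notin> B \<Longrightarrow> _\<close> unfolding cmv_def by auto
  qed
  finally show ?thesis unfolding wF_def .
qed

lemma KS_finite_mem: "A \<in> KS {..<n} k \<Longrightarrow> finite A"
  unfolding KS_def by (auto intro: finite_subset)

lemma complement_bound:
  assumes F: "F \<subseteq> KS {..<2*k} k" and I: "intersecting F" and k: "1 \<le> k"
  shows "card F \<le> (2*k - 1) choose (k - 1)"
proof -
  let ?c = "\<lambda>A. {..<2*k} - A"
  have fF: "finite F" using F finite_KS[of "{..<2*k}" k] by (auto intro: finite_subset)
  have dd: "A = {..<2*k} - ?c A" if "A \<in> F" for A using that F by (auto simp: KS_def)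
  have inj: "inj_on ?c F"
    by (rule inj_onI) (metis dd)
  have cK: "?c ` F \<subseteq> KS {..<2*k} k"
  proof
    fix C assume "C \<in> ?c ` F"
    then obtain A where A: "A \<in> F" "C = ?c A" by auto
    have AA: "A \<subseteq> {..<2*k}" "card A = k" using A F by (auto simp: KS_def)
    hence "finite A" by (auto intro: finite_subset)
    hence "card C = k" using A AA by (simp add: card_Diff_subset)
    thus "C \<in> KS {..<2*k} k" using A by (auto simp: KS_def)
  qed
  have disj: "F \<inter> ?c ` F = {}"
  proof (rule ccontr)
    assume "F \<inter> ?c ` F \<noteq> {}"
    then obtain A B where "A \<in> F" "B \<in> F" "A = ?c B" by auto
    thus False using I unfolding intersecting_def by auto
  qed
  have "card (F \<union> ?c ` F) = card F + card F"
    using disj fF card_image[OF inj] by (simp add: card_Un_disjoint)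
  moreover have "card (F \<union> ?c ` F) \<le> card (KS {..<2*k} k)"
    using F cK by (intro card_mono finite_KS) auto
  moreover have "card (KS {..<2*k} k) = (2*k) choose k" by (simp add: card_KS)
  moreover have "(2*k) choose k = 2 * ((2*k - 1) choose (k - 1))"
  proof -
    obtain m where m: "k = Suc m" using k by (cases k) auto
    have "(2*k) choose k = (Suc (2*m+1)) choose (Suc m)" using m by simp
    also have "\<dots> = ((2*m+1) choose m) + ((2*m+1) choose (Suc m))" by simp
    also have "(2*m+1) choose (Suc m) = (2*m+1) choose m"
      using binomial_symmetric[of "Suc m" "2*m+1"] by simp
    finally show ?thesis using m by simp
  qed
  ultimately show ?thesis by simp
qed

lemma split_last:
  assumes F: "F \<subseteq> KS {..<Suc l} k"
  defines "F0 \<equiv> {A\<in>F. l \<notin> A}" and "F1 \<equiv> (\<lambda>A. A - {l}) ` {A\<in>F. l \<in> A}"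
  shows "card F = card F0 + card F1" "F0 \<subseteq> KS {..<l} k" "F1 \<subseteq> KS {..<l} (k - 1)"
    "\<And>B. B \<in> F1 \<Longrightarrow> insert l B \<in> F"
proof -
  have fF: "finite F" using F finite_KS[of "{..<Suc l}" k] by (auto intro: finite_subset)
  have inj: "inj_on (\<lambda>A. A - {l}) {A\<in>F. l \<in> A}"
    by (rule inj_onI) (metis (no_types, lifting) insert_Diff mem_Collect_eq)
  have "F = F0 \<union> {A\<in>F. l \<in> A}" unfolding F0_def by auto
  hence "card F = card F0 + card {A\<in>F. l \<in> A}"
    using fF by (metis (no_types, lifting) F0_def card_Un_disjoint disjoint_iff finite_Un mem_Collect_eq)
  thus "card F = card F0 + card F1" unfolding F1_def using card_image[OF inj] by simp
  show "F0 \<subseteq> KS {..<l} k"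
  proof
    fix A assume A: "A \<in> F0"
    hence "A \<subseteq> {..<Suc l}" "card A = k" "l \<notin> A" using F unfolding F0_def KS_def by auto
    moreover have "A \<subseteq> {..<l}"
    proof
      fix x assume "x \<in> A"
      thus "x \<in> {..<l}" using calculation by (cases "x = l") (auto simp: less_Suc_eq)
    qed
    ultimately show "A \<in> KS {..<l} k" unfolding KS_def by auto
  qed
  show "F1 \<subseteq> KS {..<l} (k - 1)"
  proof
    fix B assume "B \<in> F1"
    then obtain A where A: "A \<in> F" "l \<in> A" "B = A - {l}" unfolding F1_def by auto
    have "A \<subseteq> {..<Suc l}" "card A = k" "finite A" using A F by (auto simp: KS_def intro: finite_subset)
    thus "B \<in> KS {..<l} (k - 1)" using A by (auto simp: KS_def less_Suc_eq)
  qed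
  show "\<And>B. B \<in> F1 \<Longrightarrow> insert l B \<in> F" unfolding F1_def by (auto simp: insert_absorb)
qed

lemma shifted_bound:
  "shifted F \<Longrightarrow> F \<subseteq> KS {..<n} k \<Longrightarrow> intersecting F \<Longrightarrow> 1 \<le> k \<Longrightarrow> 2*k \<le> n
   \<Longrightarrow> card F \<le> (n - 1) choose (k - 1)"
proof (induction n arbitrary: k F)
  case 0 thus ?case by simp
next
  case (Suc l)
  show ?case
  proof (cases "2*k = Suc l")
    case True thus ?thesis using complement_bound[of F k] Suc.prems by simp
  next
    case False
    hence kl: "2*k \<le> l" using Suc.prems by simp
    define F0 where "F0 = {A\<in>F. l \<notin> A}"
    define F1 where "F1 = (\<lambda>A. A - {l}) ` {A\<in>F. l \<in> A}"
    note sp = split_last[OF Suc.prems(2), folded F0_def F1_def]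
    have sh0: "shifted F0" unfolding shifted_def
    proof (intro ballI allI impI)
      fix A i j assume A: "A \<in> F0" and ij: "i < j" "j \<in> A" "i \<notin> A"
      have "A \<subseteq> {..<l}" using A sp(2) by (auto simp: KS_def)
      hence "i \<noteq> l" using ij by auto
      moreover have "insert i (A - {j}) \<in> F" using A ij Suc.prems(1) unfolding shifted_def F0_def by auto
      ultimately show "insert i (A - {j}) \<in> F0" using A unfolding F0_def by auto
    qed
    have I0: "intersecting F0" using Suc.prems(3) unfolding intersecting_def F0_def by auto
    have c0: "card F0 \<le> (l - 1) choose (k - 1)"
      using Suc.IH[OF sh0 sp(2) I0 Suc.prems(4) kl] .
    have sh1: "shifted F1"
      unfolding shifted_def
    proof (intro ballI allI impI)
      fix B i j assume B: "B \<in> F1" and ij: "i < j" "j \<in> B" "i \<notin> B"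
      have BK: "B \<subseteq> {..<l}" using B sp(3) by (auto simp: KS_def)
      have A: "insert l B \<in> F" using sp(4) B .
      have "insert i (insert l B - {j}) \<in> F"
        using Suc.prems(1) A ij BK unfolding shifted_def by auto
      moreover have "insert i (insert l B - {j}) = insert l (insert i (B - {j}))"
        using ij BK by auto
      moreover have "l \<notin> insert i (B - {j})" using ij BK by auto
      ultimately have "insert l (insert i (B - {j})) \<in> {A\<in>F. l \<in> A}" by simp
      moreover have "insert i (B - {j}) = insert l (insert i (B - {j})) - {l}"
        using \<open>l \<notin> insert i (B - {j})\<close> by simp
      ultimately show "insert i (B - {j}) \<in> F1" unfolding F1_def by (rule rev_image_eqI)
    qed
    have I1: "intersecting F1"
      unfolding intersecting_def
    proof (intro ballI notI)
      fix B1 B2 assume B1: "B1 \<in> F1" and B2: "B2 \<in> F1" and d: "B1 \<inter> B2 = {}"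
      have K1: "B1 \<subseteq> {..<l}" "card B1 = k - 1" and K2: "B2 \<subseteq> {..<l}" "card B2 = k - 1"
        using B1 B2 sp(3) by (auto simp: KS_def)
      have "card (B1 \<union> B2) < l"
        using K1 K2 d kl Suc.prems(4) by (simp add: card_Un_disjoint finite_subset)
      hence "\<not> {..<l} \<subseteq> B1 \<union> B2"
        using card_mono[of "B1 \<union> B2" "{..<l}"] K1 K2 by (auto simp: finite_subset)
      then obtain x where x: "x < l" "x \<notin> B1" "x \<notin> B2" by auto
      have A2: "insert l B2 \<in> F" using sp(4) B2 .
      have "insert x (insert l B2 - {l}) \<in> F"
        using Suc.prems(1) A2 x K2 unfolding shifted_def by auto
      moreover have "insert l B1 \<in> F" using sp(4) B1 .
      moreover have "insert l B1 \<inter> insert x (insert l B2 - {l}) = {}"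
        using x d K1 K2 by auto
      ultimately show False using Suc.prems(3) unfolding intersecting_def by blast
    qed
    show ?thesis
    proof (cases "k = 1")
      case True
      have "F1 \<subseteq> {{}}"
      proof
        fix B assume "B \<in> F1"
        hence "B \<subseteq> {..<l}" "card B = 0" using sp(3) True by (auto simp: KS_def)
        moreover hence "finite B" by (auto intro: finite_subset)
        ultimately show "B \<in> {{}}" by simp
      qed
      hence "F1 = {}" using intersecting_empty[OF I1] by auto
      thus ?thesis using sp(1) c0 True by simp
    next
      case False
      hence k2: "1 \<le> k - 1" "2*(k-1) \<le> l" using Suc.prems kl by auto
      have c1: "card F1 \<le> (l - 1) choose (k - 1 - 1)"
        using Suc.IH[OF sh1 sp(3) I1 k2] .
      obtain l' where l': "l = Suc l'" using kl Suc.prems(4) by (cases l) auto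
      obtain k' where k': "k = Suc (Suc k')" using False Suc.prems(4) by (cases k; cases "k - 1") auto
      have "((l - 1) choose (k - 1 - 1)) + ((l - 1) choose (k - 1)) = ((Suc l - 1) choose (k - 1))"
        using l' k' by simp
      thus ?thesis using sp(1) c0 c1 by simp
    qed
  qed
qed

lemma shifted_unique:
  "shifted F \<Longrightarrow> F \<subseteq> KS {..<n} k \<Longrightarrow> intersecting F \<Longrightarrow> 1 \<le> k \<Longrightarrow> 2*k < n
   \<Longrightarrow> card F = (n - 1) choose (k - 1) \<Longrightarrow> \<forall>A\<in>F. 0 \<in> A"
proof (induction k arbitrary: n F)
  case 0 thus ?case by simp
next
  case (Suc k')
  show ?case
  proof (cases "k' = 0")
    case True
    hence "card F = 1" using Suc.prems by simp
    then obtain A where FA: "F = {A}" by (metis card_1_singletonE)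
    have "card A = 1" using FA Suc.prems(2) True by (auto simp: KS_def)
    then obtain j where Aj: "A = {j}" by (metis card_1_singletonE)
    show ?thesis
    proof (cases "j = 0")
      case True thus ?thesis using FA Aj by simp
    next
      case False
      hence "insert 0 (A - {j}) \<in> F" using Suc.prems(1) FA Aj unfolding shifted_def by auto
      thus ?thesis using FA Aj False by auto
    qed
  next
    case k'0: False
    obtain l where nl: "n = Suc l" using Suc.prems(5) by (cases n) auto
    have F: "F \<subseteq> KS {..<Suc l} (Suc k')" using Suc.prems(2) nl by simp
    define F0 where "F0 = {A\<in>F. l \<notin> A}"
    define F1 where "F1 = (\<lambda>A. A - {l}) ` {A\<in>F. l \<in> A}"
    note sp = split_last[OF F, folded F0_def F1_def]
    have sh0: "shifted F0" unfolding shifted_def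
    proof (intro ballI allI impI)
      fix A i j assume A: "A \<in> F0" and ij: "i < j" "j \<in> A" "i \<notin> A"
      have "A \<subseteq> {..<l}" using A sp(2) by (auto simp: KS_def)
      hence "i \<noteq> l" using ij by auto
      moreover have "insert i (A - {j}) \<in> F" using A ij Suc.prems(1) unfolding shifted_def F0_def by auto
      ultimately show "insert i (A - {j}) \<in> F0" using A unfolding F0_def by auto
    qed
    have I0: "intersecting F0" using Suc.prems(3) unfolding intersecting_def F0_def by auto
    have c0: "card F0 \<le> (l - 1) choose k'"
      using shifted_bound[OF sh0 sp(2) I0] Suc.prems nl by simp
    have sh1: "shifted F1"
      unfolding shifted_def
    proof (intro ballI allI impI)
      fix B i j assume B: "B \<in> F1" and ij: "i < j" "j \<in> B" "i \<notin> B"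
      have BK: "B \<subseteq> {..<l}" using B sp(3) by (auto simp: KS_def)
      have A: "insert l B \<in> F" using sp(4) B .
      have "insert i (insert l B - {j}) \<in> F"
        using Suc.prems(1) A ij BK unfolding shifted_def by auto
      moreover have "insert i (insert l B - {j}) = insert l (insert i (B - {j}))"
        using ij BK by auto
      moreover have "l \<notin> insert i (B - {j})" using ij BK by auto
      ultimately have "insert l (insert i (B - {j})) \<in> {A\<in>F. l \<in> A}" by simp
      moreover have "insert i (B - {j}) = insert l (insert i (B - {j})) - {l}"
        using \<open>l \<notin> insert i (B - {j})\<close> by simp
      ultimately show "insert i (B - {j}) \<in> F1" unfolding F1_def by (rule rev_image_eqI)
    qed
    have I1: "intersecting F1"
      unfolding intersecting_def
    proof (intro ballI notI)
      fix B1 B2 assume B1: "B1 \<in> F1" and B2: "B2 \<in> F1" and d: "B1 \<inter> B2 = {}"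
      have K1: "B1 \<subseteq> {..<l}" "card B1 = k'" and K2: "B2 \<subseteq> {..<l}" "card B2 = k'"
        using B1 B2 sp(3) by (auto simp: KS_def)
      have "card (B1 \<union> B2) < l"
        using K1 K2 d Suc.prems(5) nl by (simp add: card_Un_disjoint finite_subset)
      hence "\<not> {..<l} \<subseteq> B1 \<union> B2"
        using card_mono[of "B1 \<union> B2" "{..<l}"] K1 K2 by (auto simp: finite_subset)
      then obtain x where x: "x < l" "x \<notin> B1" "x \<notin> B2" by auto
      have A2: "insert l B2 \<in> F" using sp(4) B2 .
      have "insert x (insert l B2 - {l}) \<in> F"
        using Suc.prems(1) A2 x K2 unfolding shifted_def by auto
      moreover have "insert l B1 \<in> F" using sp(4) B1 .
      moreover have "insert l B1 \<inter> insert x (insert l B2 - {l}) = {}"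
        using x d K1 K2 by auto
      ultimately show False using Suc.prems(3) unfolding intersecting_def by blast
    qed
    have c1: "card F1 \<le> (l - 1) choose (k' - 1)"
      using shifted_bound[OF sh1 sp(3) I1] Suc.prems nl k'0 by simp
    obtain l' where l': "l = Suc l'" using Suc.prems(5) nl by (cases l) auto
    obtain k'' where k'': "k' = Suc k''" using k'0 by (cases k') auto
    have pas: "((l - 1) choose (k' - 1)) + ((l - 1) choose k') = (l choose k')"
      using l' k'' by simp
    have cF: "card F = l choose k'" using Suc.prems(6) nl by simp
    have cF1: "card F1 = (l - 1) choose (k' - 1)" using sp(1) c0 c1 cF pas by linarith
    have sp3: "F1 \<subseteq> KS {..<l} k'" using sp(3) by simp
    have z1: "\<forall>B\<in>F1. 0 \<in> B"
      using Suc.IH[OF sh1 sp3 I1 _ _ cF1] k'0 Suc.prems(5) nl by simp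
    have "F1 \<subseteq> {B \<in> KS {..<l} k'. 0 \<in> B}" using z1 sp(3) by auto
    moreover have "card {B \<in> KS {..<l} k'. 0 \<in> B} = (l - 1) choose (k' - 1)"
      using card_KS_star[of "{..<l}" 0 k'] l' k'0 by simp
    ultimately have F1eq: "F1 = {B \<in> KS {..<l} k'. 0 \<in> B}"
      using cF1 by (intro card_subset_eq) (auto intro: finite_subset finite_KS)
    show ?thesis
    proof
      fix A assume A: "A \<in> F"
      show "0 \<in> A"
      proof (cases "l \<in> A")
        case True
        hence "A - {l} \<in> F1" unfolding F1_def using A by auto
        thus ?thesis using z1 by auto
      next
        case False
        show ?thesis
        proof (rule ccontr)
          assume A0: "0 \<notin> A"
          have AK: "A \<subseteq> {..<l}" "card A = Suc k'" using A False sp(2) unfolding F0_def KS_def by auto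
          have fA: "finite A" using AK by (auto intro: finite_subset)
          have sub: "A \<subseteq> {1..<l}"
          proof
            fix x assume "x \<in> A"
            thus "x \<in> {1..<l}" using AK A0 by (cases x) auto
          qed
          have "card ({1..<l} - A) = (l - 1) - Suc k'" using sub AK fA by (simp add: card_Diff_subset)
          hence "k' - 1 \<le> card ({1..<l} - A)" using Suc.prems(5) nl by simp
          then obtain X where X: "X \<subseteq> {1..<l} - A" "card X = k' - 1"
            by (meson obtain_subset_with_card_n)
          have fX: "finite X" using X by (auto intro: finite_subset)
          have "0 \<notin> X" using X by auto
          hence "card (insert 0 X) = k'" using X fX k'0 by simp
          moreover have "insert 0 X \<subseteq> {..<l}" using X l' by auto
          ultimately have "insert 0 X \<in> F1" using F1eq unfolding KS_def by auto
          hence "insert l (insert 0 X) \<in> F" using sp(4) by blast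
          moreover have "A \<inter> insert l (insert 0 X) = {}" using X False A0 by auto
          ultimately show False using Suc.prems(3) A unfolding intersecting_def by blast
        qed
      qed
    qed
  qed
qed

lemma transfer_star:
  assumes F: "F \<subseteq> KS {..<n} k" and I: "intersecting F" and k: "1 \<le> k" "2*k < n"
    and cF: "card F = (n - 1) choose (k - 1)"
    and ij: "i < j" "j < n" and st: "\<forall>A\<in>cmp i j F. c \<in> A"
  shows "\<exists>c'. \<forall>A\<in>F. c' \<in> A"
proof (cases "c = i")
  case False
  have "\<forall>A\<in>F. c \<in> A"
  proof
    fix A assume A: "A \<in> F"
    hence "c \<in> cmv i j F A" using st unfolding cmp_def by auto
    thus "c \<in> A" using False unfolding cmv_def by (auto split: if_splits)
  qed
  thus ?thesis by blast
next
  case ci: True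
  have ineq: "i \<noteq> j" using ij by simp
  have iY: "i \<in> {..<n}" using ij by simp
  have sub: "cmp i j F \<subseteq> {B \<in> KS {..<n} k. i \<in> B}"
    using comp_KS[OF F iY] st ci by auto
  have "card (cmp i j F) = card {B \<in> KS {..<n} k. i \<in> B}"
    using card_comp[OF ineq] cF card_KS_star[of "{..<n}" i k] iY k by simp
  hence eq: "cmp i j F = {B \<in> KS {..<n} k. i \<in> B}"
    using sub by (intro card_subset_eq) (auto intro: finite_subset finite_KS)
  define Y where "Y = {..<n} - {i, j}"
  have fY: "finite Y" unfolding Y_def by simp
  have cY: "card Y = n - 2" unfolding Y_def using ij by (simp add: card_Diff_subset)
  have orr: "insert i X \<in> F \<or> insert j X \<in> F" if X: "X \<in> KS Y (k - 1)" for X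
  proof -
    have XY: "X \<subseteq> Y" "card X = k - 1" using X unfolding KS_def by auto
    have fX: "finite X" using XY fY by (auto intro: finite_subset)
    have "i \<notin> X" "j \<notin> X" using XY unfolding Y_def by auto
    hence "card (insert i X) = k" using XY fX k by simp
    moreover have "insert i X \<subseteq> {..<n}" using XY ij unfolding Y_def by auto
    ultimately have "insert i X \<in> cmp i j F" using eq unfolding KS_def by auto
    then obtain A where A: "A \<in> F" "cmv i j F A = insert i X" unfolding cmp_def by auto
    show ?thesis
    proof (cases "j \<in> A \<and> i \<notin> A \<and> insert i (A - {j}) \<notin> F")
      case True
      hence "cmv i j F A = insert i (A - {j})" unfolding cmv_def by auto
      hence "insert i (A - {j}) = insert i X" using A by simp
      hence "A - {j} = X" using True \<open>i \<notin> X\<close>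
        by (metis Diff_iff insert_Diff1 insert_absorb insert_ident singletonD)
      hence "A = insert j X" using True by auto
      thus ?thesis using A by simp
    next
      case False
      hence "cmv i j F A = A" unfolding cmv_def by auto
      hence "A = insert i X" using A by simp
      thus ?thesis using A by simp
    qed
  qed
  have ij_in: "i \<in> A \<or> j \<in> A" if A: "A \<in> F" for A
  proof -
    have "cmv i j F A \<in> cmp i j F" using A unfolding cmp_def by auto
    hence "i \<in> cmv i j F A" using eq by auto
    thus ?thesis unfolding cmv_def by (auto split: if_splits)
  qed
  show ?thesis
  proof (rule ccontr)
    assume nst: "\<not> (\<exists>c'. \<forall>A\<in>F. c' \<in> A)"
    then obtain A where A: "A \<in> F" "i \<notin> A" by blast
    from nst obtain B where B: "B \<in> F" "j \<notin> B" by blast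
    have jA: "j \<in> A" using ij_in A by blast
    have iB: "i \<in> B" using ij_in B by blast
    have AK: "A \<subseteq> {..<n}" "card A = k" "finite A" using A F by (auto simp: KS_def intro: finite_subset)
    have BK: "B \<subseteq> {..<n}" "card B = k" "finite B" using B F by (auto simp: KS_def intro: finite_subset)
    have XA: "A - {j} \<in> KS Y (k - 1)" using AK A jA unfolding KS_def Y_def by auto
    have XB: "B - {i} \<in> KS Y (k - 1)" using BK B iB unfolding KS_def Y_def by auto
    define Q where "Q = {X \<in> KS Y (k - 1). insert j X \<in> F}"
    have XAQ: "A - {j} \<in> Q" unfolding Q_def using XA A jA by (simp add: insert_absorb)
    have cl: "X' \<in> Q" if "X \<in> Q" "X' \<in> KS Y (k - 1)" "X \<inter> X' = {}" for X X'
    proof -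
      have "insert j X \<in> F" using that unfolding Q_def by auto
      moreover have "i \<notin> X" "j \<notin> X'" using that unfolding Q_def KS_def Y_def by auto
      moreover have "insert i X' \<inter> insert j X = {}" using that(3) calculation(2,3) ineq by auto
      ultimately have "insert i X' \<notin> F"
        using I unfolding intersecting_def by metis
      thus ?thesis using orr[OF that(2)] that(2) unfolding Q_def by auto
    qed
    have r: "2 * (k - 1) < card Y" using cY k by simp
    have Qsub: "Q \<subseteq> KS Y (k - 1)" unfolding Q_def by auto
    have allQ: "KS Y (k - 1) \<subseteq> Q"
      by (rule kneser_conn[OF fY r Qsub cl XAQ])
    have XB': "B - {i} \<subseteq> Y" "card (B - {i}) = k - 1" using XB unfolding KS_def by auto
    have "card (Y - (B - {i})) = card Y - card (B - {i})"
      using XB' fY BK(3) by (intro card_Diff_subset) auto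
    hence "card (Y - (B - {i})) = (n - 2) - (k - 1)" using XB' cY by simp
    hence "k - 1 \<le> card (Y - (B - {i}))" using k by simp
    then obtain X' where X': "X' \<subseteq> Y - (B - {i})" "card X' = k - 1"
      by (meson obtain_subset_with_card_n)
    have "X' \<in> KS Y (k - 1)" using X' unfolding KS_def by auto
    hence "insert j X' \<in> F" using allQ unfolding Q_def by auto
    moreover have "B \<inter> insert j X' = {}" using X' B unfolding Y_def by auto
    ultimately show False using I B unfolding intersecting_def by blast
  qed
qed

lemma ekr_unique:
  "F \<subseteq> KS {..<n} k \<Longrightarrow> intersecting F \<Longrightarrow> 1 \<le> k \<Longrightarrow> 2*k < n
   \<Longrightarrow> card F = (n - 1) choose (k - 1) \<Longrightarrow> \<exists>c. \<forall>A\<in>F. c \<in> A"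
proof (induction "wF F" arbitrary: F rule: less_induct)
  case less
  show ?case
  proof (cases "shifted F")
    case True
    thus ?thesis using shifted_unique[OF True less.prems(1,2,3,4,5)] by blast
  next
    case False
    then obtain A i j where A: "A \<in> F" "i < j" "j \<in> A" "i \<notin> A" "insert i (A - {j}) \<notin> F"
      unfolding shifted_def by blast
    have jn: "j < n" using A less.prems(1) by (auto simp: KS_def)
    have fF: "finite F" using less.prems(1) finite_KS[of "{..<n}" k] by (auto intro: finite_subset)
    have fin: "\<forall>A\<in>F. finite A" using less.prems(1) by (auto simp: KS_def intro: finite_subset)
    have lt: "wF (cmp i j F) < wF F" using wF_comp[OF fF fin A(2) A(1,3,4,5)] .
    have in_n: "i \<in> {..<n}" using A(2) jn by simp
    have "\<exists>c. \<forall>B\<in>cmp i j F. c \<in> B"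
      using less.hyps[OF lt comp_KS[OF less.prems(1) in_n] comp_intersecting[OF less.prems(2)]
          less.prems(3,4)] card_comp[of i j F] less.prems(5) A(2) by simp
    then obtain c where "\<forall>B\<in>cmp i j F. c \<in> B" by blast
    thus ?thesis using transfer_star[OF less.prems(1-5) A(2) jn] by blast
  qed
qed

section \<open>Signs\<close>

definition ninv :: "nat set \<Rightarrow> nat set \<Rightarrow> nat" where
  "ninv A B = card {p \<in> A \<times> B. snd p < fst p}"

lemma shuffle_sign_inv: "shuffle_sign A B = (-1) ^ ninv A B"
proof -
  have "{(a, b). a \<in> A \<and> b \<in> B \<and> b < a} = {p \<in> A \<times> B. snd p < fst p}" by auto
  thus ?thesis unfolding shuffle_sign_def ninv_def by simp
qed

lemma ninv_union_right:
  assumes "finite A" "finite B" "finite C" "B \<inter> C = {}"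
  shows "ninv A (B \<union> C) = ninv A B + ninv A C"
proof -
  have e: "{p \<in> A \<times> (B \<union> C). snd p < fst p} = {p \<in> A \<times> B. snd p < fst p} \<union> {p \<in> A \<times> C. snd p < fst p}" by blast
  have d: "{p \<in> A \<times> B. snd p < fst p} \<inter> {p \<in> A \<times> C. snd p < fst p} = {}" using assms(4) by blast
  have f: "finite {p \<in> A \<times> B. snd p < fst p}" "finite {p \<in> A \<times> C. snd p < fst p}" using assms by auto
  show ?thesis unfolding ninv_def e using card_Un_disjoint[OF f d] .
qed

lemma ninv_union_left:
  assumes "finite A" "finite B" "finite C" "A \<inter> B = {}"
  shows "ninv (A \<union> B) C = ninv A C + ninv B C"
proof -
  have e: "{p \<in> (A \<union> B) \<times> C. snd p < fst p} = {p \<in> A \<times> C. snd p < fst p} \<union> {p \<in> B \<times> C. snd p < fst p}" by blast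
  have d: "{p \<in> A \<times> C. snd p < fst p} \<inter> {p \<in> B \<times> C. snd p < fst p} = {}" using assms(4) by blast
  have f: "finite {p \<in> A \<times> C. snd p < fst p}" "finite {p \<in> B \<times> C. snd p < fst p}" using assms by auto
  show ?thesis unfolding ninv_def e using card_Un_disjoint[OF f d] .
qed

lemma ninv_single_single: "ninv {a} {b} = (if b < a then 1 else 0)"
proof -
  have "{p \<in> {a} \<times> {b}. snd p < fst p} = (if b < a then {(a, b)} else {})" by auto
  thus ?thesis unfolding ninv_def by simp
qed

lemma ninv_empty_left[simp]: "ninv {} B = 0" and ninv_empty_right[simp]: "ninv A {} = 0"
  unfolding ninv_def by simp_all

lemma ninv_insert_right:
  assumes "finite A" "finite B" "q \<notin> B"
  shows "ninv A (insert q B) = ninv A B + ninv A {q}"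
  using ninv_union_right[of A B "{q}"] assms by simp

lemma ninv_insert_left:
  assumes "finite A" "finite B" "p \<notin> A"
  shows "ninv (insert p A) B = ninv A B + ninv {p} B"
  using ninv_union_left[of A "{p}" B] assms by simp

lemma ninv_swap_single:
  assumes "finite B" "j \<notin> B"
  shows "ninv {j} B + ninv B {j} = card B"
  using assms
proof (induction B rule: finite_induct)
  case empty show ?case by (simp only: ninv_empty_left ninv_empty_right card.empty add_0)
next
  case (insert b B)
  have "ninv {j} (insert b B) = ninv {j} B + ninv {j} {b}"
    using insert by (intro ninv_insert_right) auto
  moreover have "ninv (insert b B) {j} = ninv B {j} + ninv {b} {j}"
    using insert by (intro ninv_insert_left) auto
  moreover have "ninv {j} {b} + ninv {b} {j} = 1"
    using insert.prems by (auto simp: ninv_single_single)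
  ultimately show ?case using insert by simp
qed

lemma neg1_odd: "odd (m + n) \<Longrightarrow> (-1::'a::ring_1) ^ m = - ((-1) ^ n)"
proof (cases "even m")
  case True
  assume "odd (m + n)"
  hence "odd n" using True by simp
  thus ?thesis using True by (simp add: neg_one_odd_power)
next
  case False
  assume "odd (m + n)"
  hence "even n" using False by simp
  thus ?thesis using False by (simp add: neg_one_odd_power)
qed

lemma sign_sq: "shuffle_sign A B * shuffle_sign A B = (1::'a::field)"
proof -
  have "(-1::'a) ^ ninv A B * (-1) ^ ninv A B = (-1) ^ (ninv A B + ninv A B)" by (simp only: power_add)
  also have "\<dots> = 1" by (rule neg_one_even_power) simp
  finally show ?thesis unfolding shuffle_sign_inv .
qed

lemma sign_nz: "shuffle_sign A B \<noteq> (0::'a::field)"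
  unfolding shuffle_sign_inv by simp

lemma arith_aux2: "(a::nat) + b = 1 \<Longrightarrow> P = x + a \<Longrightarrow> Q = y + b \<Longrightarrow> (P + y) + (Q + x) = 2 * (x + y) + 1"
  by simp

lemma arith_aux1:
  "(a1::nat) = b0 + c0 \<Longrightarrow> b0 = bc + bj \<Longrightarrow> c0 = cC + cj
   \<Longrightarrow> a2 = d0 + e0 \<Longrightarrow> d0 = bc + bcc \<Longrightarrow> e0 = jC + jc
   \<Longrightarrow> jB + bj = m \<Longrightarrow> cB + bcc = m \<Longrightarrow> cj + jc = 1
   \<Longrightarrow> (a1 + cB + jC) + (a2 + cC + jB) = 2 * (bc + cC + jC + m) + 1"
  by simp

lemma sign_id2:
  assumes "finite B" "p \<noteq> q" "p \<notin> B" "q \<notin> B"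
  shows "shuffle_sign {p} (insert q B) * shuffle_sign {q} B =
         - (shuffle_sign {q} (insert p B) * (shuffle_sign {p} B :: 'a::field))"
proof -
  have e1: "ninv {p} (insert q B) = ninv {p} B + ninv {p} {q}" using assms by (intro ninv_insert_right) auto
  have e2: "ninv {q} (insert p B) = ninv {q} B + ninv {q} {p}" using assms by (intro ninv_insert_right) auto
  have "ninv {p} {q} + ninv {q} {p} = 1" using assms by (auto simp: ninv_single_single)
  hence "(ninv {p} (insert q B) + ninv {q} B) + (ninv {q} (insert p B) + ninv {p} B) =
     2 * (ninv {p} B + ninv {q} B) + 1"
    by (rule arith_aux2[OF _ e1 e2])
  hence "odd ((ninv {p} (insert q B) + ninv {q} B) + (ninv {q} (insert p B) + ninv {p} B))"
    by (simp only:) simp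
  hence "(-1::'a) ^ (ninv {p} (insert q B) + ninv {q} B) = - ((-1) ^ (ninv {q} (insert p B) + ninv {p} B))"
    by (rule neg1_odd)
  thus ?thesis unfolding shuffle_sign_inv by (simp add: power_add)
qed

lemma sign_id1:
  assumes fin: "finite B" "finite C" and d: "B \<inter> C = {}" and cj: "c \<noteq> j"
    and nin: "c \<notin> B" "c \<notin> C" "j \<notin> B" "j \<notin> C" and card: "card B = card C"
  shows "shuffle_sign (insert c B) (insert j C) * shuffle_sign {c} B * shuffle_sign {j} C =
         - (shuffle_sign (insert j B) (insert c C) * shuffle_sign {c} C * (shuffle_sign {j} B :: 'a::field))"
proof -
  have a1: "ninv (insert c B) (insert j C) = ninv B (insert j C) + ninv {c} (insert j C)"
    using fin nin by (intro ninv_insert_left) auto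
  have a2: "ninv B (insert j C) = ninv B C + ninv B {j}" using fin nin by (intro ninv_insert_right) auto
  have a3: "ninv {c} (insert j C) = ninv {c} C + ninv {c} {j}" using fin nin by (intro ninv_insert_right) auto
  have b1: "ninv (insert j B) (insert c C) = ninv B (insert c C) + ninv {j} (insert c C)"
    using fin nin by (intro ninv_insert_left) auto
  have b2: "ninv B (insert c C) = ninv B C + ninv B {c}" using fin nin by (intro ninv_insert_right) auto
  have b3: "ninv {j} (insert c C) = ninv {j} C + ninv {j} {c}" using fin nin by (intro ninv_insert_right) auto
  have s1: "ninv {j} B + ninv B {j} = card B" using fin nin by (intro ninv_swap_single) auto
  have s2: "ninv {c} B + ninv B {c} = card B" using fin nin by (intro ninv_swap_single) auto
  have s3: "ninv {c} {j} + ninv {j} {c} = 1" using cj by (auto simp: ninv_single_single)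
  have "(ninv (insert c B) (insert j C) + ninv {c} B + ninv {j} C) +
             (ninv (insert j B) (insert c C) + ninv {c} C + ninv {j} B) =
        2 * (ninv B C + ninv {c} C + ninv {j} C + card B) + 1"
    by (rule arith_aux1[OF a1 a2 a3 b1 b2 b3 s1 s2 s3])
  hence "odd ((ninv (insert c B) (insert j C) + ninv {c} B + ninv {j} C) +
             (ninv (insert j B) (insert c C) + ninv {c} C + ninv {j} B))"
    by (simp only:) simp
  hence "(-1::'a) ^ (ninv (insert c B) (insert j C) + ninv {c} B + ninv {j} C) =
         - ((-1) ^ (ninv (insert j B) (insert c C) + ninv {c} C + ninv {j} B))"
    by (rule neg1_odd)
  thus ?thesis unfolding shuffle_sign_inv by (simp add: power_add)
qed

section \<open>Weights\<close>

definition wt :: "nat set \<Rightarrow> nat" where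
  "wt A = (\<Sum>a\<in>A. 2 ^ a)"

lemma wt_union: "finite A \<Longrightarrow> finite B \<Longrightarrow> A \<inter> B = {} \<Longrightarrow> wt (A \<union> B) = wt A + wt B"
  unfolding wt_def by (rule sum.union_disjoint)

lemma sum_pow2_lt: "(\<Sum>i<m. (2::nat) ^ i) < 2 ^ m"
  by (induction m) auto

lemma wt_below: "finite S \<Longrightarrow> S \<subseteq> {..<m} \<Longrightarrow> wt S < 2 ^ m"
proof -
  assume "finite S" "S \<subseteq> {..<m}"
  hence "wt S \<le> (\<Sum>i<m. (2::nat) ^ i)" unfolding wt_def by (intro sum_mono2) auto
  thus ?thesis using sum_pow2_lt[of m] by simp
qed

lemma wt_split:
  assumes "finite A"
  shows "wt A = wt (A \<inter> {m<..}) + wt (A \<inter> {m}) + wt (A \<inter> {..<m})"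
proof -
  have "A = (A \<inter> {m<..}) \<union> ((A \<inter> {m}) \<union> (A \<inter> {..<m}))" by auto
  hence "wt A = wt ((A \<inter> {m<..}) \<union> ((A \<inter> {m}) \<union> (A \<inter> {..<m})))" by (rule arg_cong)
  also have "\<dots> = wt (A \<inter> {m<..}) + wt ((A \<inter> {m}) \<union> (A \<inter> {..<m}))"
    using assms by (intro wt_union) auto
  also have "wt ((A \<inter> {m}) \<union> (A \<inter> {..<m})) = wt (A \<inter> {m}) + wt (A \<inter> {..<m})"
    using assms by (intro wt_union) auto
  finally show ?thesis by simp
qed

lemma wt_less_aux:
  assumes fA: "finite A" and fB: "finite B" and m: "m \<in> A" "m \<notin> B"
    and above: "A \<inter> {m<..} = B \<inter> {m<..}"
  shows "wt B < wt A"
proof -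
  have "wt B = wt (B \<inter> {m<..}) + wt (B \<inter> {m}) + wt (B \<inter> {..<m})" using fB by (rule wt_split)
  moreover have "B \<inter> {m} = {}" using m by auto
  hence "wt (B \<inter> {m}) = 0" by (simp add: wt_def)
  moreover have "wt (B \<inter> {..<m}) < 2 ^ m" using fB by (intro wt_below) auto
  moreover have "wt A = wt (A \<inter> {m<..}) + wt (A \<inter> {m}) + wt (A \<inter> {..<m})" using fA by (rule wt_split)
  moreover have "A \<inter> {m} = {m}" using m by auto
  hence "wt (A \<inter> {m}) = 2 ^ m" by (simp add: wt_def)
  moreover have "wt (A \<inter> {m<..}) = wt (B \<inter> {m<..})" using above by simp
  ultimately show ?thesis by linarith
qed

lemma wt_inj:
  assumes fA: "finite A" and fB: "finite B" and eq: "wt A = wt B"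
  shows "A = B"
proof (rule ccontr)
  assume ne: "A \<noteq> B"
  let ?D = "(A - B) \<union> (B - A)"
  have fD: "finite ?D" using fA fB by simp
  have neD: "?D \<noteq> {}" using ne by auto
  define m where "m = Max ?D"
  have mD: "m \<in> ?D" unfolding m_def using fD neD by (rule Max_in)
  have above: "A \<inter> {m<..} = B \<inter> {m<..}"
  proof -
    have "x \<notin> ?D" if "m < x" for x using Max_ge[OF fD, of x] that unfolding m_def by auto
    thus ?thesis by auto
  qed
  show False
  proof (cases "m \<in> A")
    case True
    hence mB: "m \<notin> B" using mD by auto
    have "wt B < wt A" by (rule wt_less_aux[OF fA fB True mB above])
    thus False using eq by simp
  next
    case False
    hence mB: "m \<in> B" using mD by auto
    have "wt A < wt B" by (rule wt_less_aux[OF fB fA mB False above[symmetric]])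
    thus False using eq by simp
  qed
qed

lemma wt_insert: "finite B \<Longrightarrow> c \<notin> B \<Longrightarrow> wt (insert c B) = 2 ^ c + wt B"
  unfolding wt_def by simp

section \<open>Leading terms\<close>

lemma sum_fun_apply: "(\<Sum>i\<in>I. f i) x = (\<Sum>i\<in>I. f i x)"
  by (induction I rule: infinite_finite_induct) auto

definition lead :: "(nat set \<Rightarrow> 'a::zero) \<Rightarrow> nat set" where
  "lead x = (SOME S. x S \<noteq> 0 \<and> (\<forall>T. x T \<noteq> 0 \<longrightarrow> wt S \<le> wt T))"

lemma extpow_supp: "x \<in> extpow n k \<Longrightarrow> x S \<noteq> 0 \<Longrightarrow> S \<in> KS {..<n} k"
  unfolding extpow_def KS_def by auto

lemma extpow_supp_finite: "x \<in> extpow n k \<Longrightarrow> finite {S. x S \<noteq> 0}"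
  using extpow_supp[of x n k] finite_KS[of "{..<n}" k] by (auto intro: finite_subset)

lemma extpow_fin: "x \<in> extpow n k \<Longrightarrow> x S \<noteq> 0 \<Longrightarrow> finite S"
  using extpow_supp[of x n k S] KS_finite_mem by blast

lemma lead_ex:
  assumes x: "x \<in> extpow n k" and nz: "x \<noteq> 0"
  shows "\<exists>S. x S \<noteq> 0 \<and> (\<forall>T. x T \<noteq> 0 \<longrightarrow> wt S \<le> wt T)"
proof -
  let ?U = "{S. x S \<noteq> 0}"
  have fU: "finite ?U" using x by (rule extpow_supp_finite)
  have neU: "?U \<noteq> {}" using nz by (auto simp: fun_eq_iff)
  define m where "m = Min (wt ` ?U)"
  have "m \<in> wt ` ?U" unfolding m_def using fU neU by (intro Min_in) auto
  then obtain S where S: "x S \<noteq> 0" "wt S = m" by auto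
  have "\<forall>T. x T \<noteq> 0 \<longrightarrow> wt S \<le> wt T" using S fU unfolding m_def by (auto intro: Min_le)
  thus ?thesis using S by blast
qed

lemma lead_prop:
  assumes "x \<in> extpow n k" "x \<noteq> 0"
  shows "x (lead x) \<noteq> 0" "\<And>T. x T \<noteq> 0 \<Longrightarrow> wt (lead x) \<le> wt T"
proof -
  have "x (lead x) \<noteq> 0 \<and> (\<forall>T. x T \<noteq> 0 \<longrightarrow> wt (lead x) \<le> wt T)"
    unfolding lead_def using someI_ex[OF lead_ex[OF assms]] .
  thus "x (lead x) \<noteq> 0" "\<And>T. x T \<noteq> 0 \<Longrightarrow> wt (lead x) \<le> wt T" by auto
qed

lemma lead_KS: "x \<in> extpow n k \<Longrightarrow> x \<noteq> 0 \<Longrightarrow> lead x \<in> KS {..<n} k"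
  using lead_prop(1) extpow_supp by blast

lemma lead_eq:
  assumes x: "x \<in> extpow n k" and S: "x S \<noteq> 0" and m: "\<And>T. x T \<noteq> 0 \<Longrightarrow> wt S \<le> wt T"
  shows "lead x = S"
proof -
  have nz: "x \<noteq> 0" using S by auto
  have "wt (lead x) = wt S" using lead_prop[OF x nz] m S by (meson le_antisym)
  moreover have "finite (lead x)" "finite S" using lead_prop[OF x nz] S extpow_fin[OF x] by auto
  ultimately show ?thesis using wt_inj by blast
qed

lemma lead_strict:
  assumes x: "x \<in> extpow n k" and T: "x T \<noteq> 0" "T \<noteq> lead x"
  shows "wt (lead x) < wt T"
proof -
  have nz: "x \<noteq> 0" using T by auto
  have "wt (lead x) \<le> wt T" using lead_prop[OF x nz] T by auto
  moreover have "wt (lead x) \<noteq> wt T"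
  proof
    assume "wt (lead x) = wt T"
    moreover have "finite (lead x)" "finite T" using lead_prop[OF x nz] T extpow_fin[OF x] by auto
    ultimately show False using wt_inj T by metis
  qed
  ultimately show ?thesis by simp
qed

definition initial :: "(nat set \<Rightarrow> 'a::zero) set \<Rightarrow> nat set set" where
  "initial L = {lead x | x. x \<in> L \<and> x \<noteq> 0}"

lemma sum_single_nz:
  assumes "finite I" "a \<in> I" "\<And>i. i \<in> I \<Longrightarrow> i \<noteq> a \<Longrightarrow> f i = 0"
  shows "sum f I = f a"
proof -
  have "sum f I = f a + sum f (I - {a})" using assms by (simp add: sum.remove)
  moreover have "sum f (I - {a}) = 0" using assms by (intro sum.neutral) auto
  ultimately show ?thesis by simp
qed

lemma wedge_leads:
  fixes x y :: "nat set \<Rightarrow> 'a::field"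
  assumes x: "x \<in> extpow n k" "x \<noteq> 0" and y: "y \<in> extpow n k" "y \<noteq> 0"
    and d: "lead x \<inter> lead y = {}"
  shows "wedge x y (lead x \<union> lead y) \<noteq> 0"
proof -
  define A where "A = lead x"
  define B where "B = lead y"
  define S where "S = A \<union> B"
  have xA: "x A \<noteq> 0" and yB: "y B \<noteq> 0" unfolding A_def B_def using lead_prop x y by auto
  have fA: "finite A" and fB: "finite B" using xA yB extpow_fin x y by auto
  have fS: "finite S" unfolding S_def using fA fB by simp
  let ?f = "\<lambda>A'. shuffle_sign A' (S - A') * x A' * y (S - A')"
  have zero: "?f A' = 0" if A': "A' \<in> Pow S" "A' \<noteq> A" for A'
  proof (rule ccontr)
    assume "?f A' \<noteq> 0"
    hence x': "x A' \<noteq> 0" and y': "y (S - A') \<noteq> 0" by auto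
    have le1: "wt A \<le> wt A'" unfolding A_def using lead_prop(2)[OF x x'] .
    have le2: "wt B \<le> wt (S - A')" unfolding B_def using lead_prop(2)[OF y y'] .
    have fA': "finite A'" using A' fS by (auto intro: finite_subset)
    have "wt S = wt A' + wt (S - A')"
    proof -
      have "S = A' \<union> (S - A')" using A' by auto
      hence "wt S = wt (A' \<union> (S - A'))" by (rule arg_cong)
      also have "\<dots> = wt A' + wt (S - A')" using fA' fS by (intro wt_union) auto
      finally show ?thesis .
    qed
    moreover have "wt S = wt A + wt B" unfolding S_def using fA fB d A_def B_def by (intro wt_union) auto
    ultimately have "wt A' = wt A" using le1 le2 by linarith
    hence "A' = A" using wt_inj fA fA' by metis
    thus False using A' by simp
  qed
  have "wedge x y S = (\<Sum>A'\<in>Pow S. ?f A')" unfolding wedge_def using fS by simp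
  also have "\<dots> = ?f A" using fS zero by (intro sum_single_nz) (auto simp: S_def)
  also have "S - A = B" unfolding S_def using d A_def B_def by auto
  finally have "wedge x y S = shuffle_sign A B * x A * y B" by simp
  moreover have "shuffle_sign A B * x A * y B \<noteq> 0" using xA yB sign_nz by simp
  ultimately show ?thesis unfolding S_def A_def B_def by simp
qed

lemma initial_intersecting:
  fixes L :: "(nat set \<Rightarrow> 'a::field) set"
  assumes L: "L \<subseteq> extpow n k" and iso: "\<forall>x\<in>L. \<forall>y\<in>L. wedge x y = 0"
  shows "intersecting (initial L)"
  unfolding intersecting_def
proof (intro ballI notI)
  fix A B assume "A \<in> initial L" "B \<in> initial L" and d: "A \<inter> B = {}"
  then obtain x y where xy: "x \<in> L" "x \<noteq> 0" "A = lead x" "y \<in> L" "y \<noteq> 0" "B = lead y"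
    unfolding initial_def by auto
  have "wedge x y (lead x \<union> lead y) \<noteq> 0"
    using wedge_leads[of x n k y] xy L d by auto
  thus False using iso xy by simp
qed

lemma initial_KS: "L \<subseteq> extpow n k \<Longrightarrow> initial L \<subseteq> KS {..<n} k"
  unfolding initial_def using lead_KS by blast

lemma span_reduce:
  fixes M Y :: "(nat set \<Rightarrow> 'a::field) set"
  assumes M: "M \<subseteq> extpow n k" "fvs.subspace M" and Y: "Y \<subseteq> M"
    and cov: "\<And>x. x \<in> M \<Longrightarrow> x \<noteq> 0 \<Longrightarrow> \<exists>y\<in>Y. y \<noteq> 0 \<and> lead y = lead x"
  shows "M \<subseteq> fvs.span Y"
proof -
  define \<mu> where "\<mu> x = card {T \<in> KS {..<n} k. wt (lead x) \<le> wt T}" for x :: "nat set \<Rightarrow> 'a"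
  have "\<forall>x\<in>M. \<mu> x = N \<longrightarrow> x \<in> fvs.span Y" for N
  proof (induction N rule: less_induct)
    case (less N)
    show ?case
    proof (intro ballI impI)
      fix x assume x: "x \<in> M" and xN: "\<mu> x = N"
      show "x \<in> fvs.span Y"
      proof (cases "x = 0")
        case True thus ?thesis by (simp add: fvs.span_zero)
      next
        case False
        obtain y where y: "y \<in> Y" "y \<noteq> 0" "lead y = lead x" using cov x False by blast
        define A where "A = lead x"
        define r where "r = x A / y A"
        define x' where "x' = x - fscale r y"
        have yM: "y \<in> M" using Y y by auto
        have xE: "x \<in> extpow n k" and yE: "y \<in> extpow n k" using M x yM by auto
        have x'M: "x' \<in> M" unfolding x'_def using M(2) x yM
          by (simp add: fvs.subspace_diff fvs.subspace_scale)
        have x'E: "x' \<in> extpow n k" using x'M M by auto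
        have yA: "y A \<noteq> 0" using lead_prop(1)[OF yE y(2)] y(3) A_def by simp
        have x'A: "x' A = 0" unfolding x'_def r_def fscale_def using yA by simp
        have AK: "A \<in> KS {..<n} k" unfolding A_def using lead_KS[OF xE False] .
        have bigger: "wt A < wt T" if T: "x' T \<noteq> 0" for T
        proof -
          have "x T \<noteq> 0 \<or> y T \<noteq> 0" using T unfolding x'_def fscale_def by auto
          hence "wt A \<le> wt T"
            using lead_prop(2)[OF xE False] lead_prop(2)[OF yE y(2)] y(3) A_def by auto
          moreover have "T \<noteq> A" using T x'A by auto
          moreover have "finite T" using extpow_fin[OF x'E T] .
          moreover have "finite A" using AK KS_finite_mem by blast
          ultimately show ?thesis using wt_inj by (metis le_neq_implies_less)
        qed
        show ?thesis
        proof (cases "x' = 0")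
          case True
          hence "x = fscale r y" unfolding x'_def by simp
          thus ?thesis using y by (simp add: fvs.span_scale fvs.span_base)
        next
          case x'nz: False
          have lt: "wt A < wt (lead x')" using bigger lead_prop(1)[OF x'E x'nz] by blast
          have "{T \<in> KS {..<n} k. wt (lead x') \<le> wt T} \<subset> {T \<in> KS {..<n} k. wt (lead x) \<le> wt T}"
          proof
            show "{T \<in> KS {..<n} k. wt (lead x') \<le> wt T} \<subseteq> {T \<in> KS {..<n} k. wt (lead x) \<le> wt T}"
              using lt A_def by auto
            have "A \<in> {T \<in> KS {..<n} k. wt (lead x) \<le> wt T}" using AK A_def by simp
            moreover have "A \<notin> {T \<in> KS {..<n} k. wt (lead x') \<le> wt T}" using lt by simp
            ultimately show "{T \<in> KS {..<n} k. wt (lead x') \<le> wt T} \<noteq> {T \<in> KS {..<n} k. wt (lead x) \<le> wt T}"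
              by blast
          qed
          hence "\<mu> x' < \<mu> x" unfolding \<mu>_def
            by (intro psubset_card_mono) (auto intro: finite_subset finite_KS)
          hence "x' \<in> fvs.span Y" using less.IH xN x'M by blast
          moreover have "x = x' + fscale r y" unfolding x'_def by simp
          ultimately show ?thesis using y by (metis fvs.span_add fvs.span_base fvs.span_scale)
        qed
      qed
    qed
  qed
  thus ?thesis by blast
qed

lemma card_initial:
  fixes L :: "(nat set \<Rightarrow> 'a::field) set"
  assumes L: "L \<subseteq> extpow n k" "fvs.subspace L"
  shows "card (initial L) = fvs.dim L"
proof -
  have "\<forall>A\<in>initial L. \<exists>x. x \<in> L \<and> x \<noteq> 0 \<and> lead x = A" unfolding initial_def by auto
  then obtain y where y: "\<And>A. A \<in> initial L \<Longrightarrow> y A \<in> L \<and> y A \<noteq> 0 \<and> lead (y A) = A" by metis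
  let ?Y = "y ` initial L"
  have inj: "inj_on y (initial L)" by (rule inj_onI) (metis y)
  have YL: "?Y \<subseteq> L" using y by auto
  have fin: "finite (initial L)" using initial_KS[OF L(1)] finite_KS[of "{..<n}" k]
    by (auto intro: finite_subset)
  have span: "L \<subseteq> fvs.span ?Y"
  proof (rule span_reduce[OF L YL])
    fix x assume "x \<in> L" "x \<noteq> 0"
    hence "lead x \<in> initial L" unfolding initial_def by auto
    thus "\<exists>z\<in>?Y. z \<noteq> 0 \<and> lead z = lead x" using y by blast
  qed
  have indep: "fvs.independent ?Y"
    unfolding fvs.independent_explicit_finite_subsets
  proof (intro allI impI ballI)
    fix S u v assume S: "S \<subseteq> ?Y" "finite S" and sum0: "(\<Sum>v\<in>S. fscale (u v) v) = 0" and v: "v \<in> S"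
    show "u v = 0"
    proof (rule ccontr)
      assume "u v \<noteq> 0"
      hence ne: "{w \<in> S. u w \<noteq> 0} \<noteq> {}" using v by auto
      have fW: "finite {w \<in> S. u w \<noteq> 0}" using S by simp
      define m where "m = Min ((\<lambda>w. wt (lead w)) ` {w \<in> S. u w \<noteq> 0})"
      have "m \<in> (\<lambda>w. wt (lead w)) ` {w \<in> S. u w \<noteq> 0}" unfolding m_def using fW ne by (intro Min_in) auto
      then obtain w0 where w0: "w0 \<in> S" "u w0 \<noteq> 0" "wt (lead w0) = m" by auto
      have mmin: "m \<le> wt (lead w)" if "w \<in> S" "u w \<noteq> 0" for w
        unfolding m_def using fW that by (intro Min_le) auto
      have wE: "w \<in> extpow n k" "w \<noteq> 0" if "w \<in> S" for w using that S y L by auto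
      define A where "A = lead w0"
      have "(\<Sum>w\<in>S. fscale (u w) w) A = 0" using sum0 by simp
      hence "(\<Sum>w\<in>S. u w * w A) = 0" by (simp add: sum_fun_apply fscale_def)
      moreover have "(\<Sum>w\<in>S. u w * w A) = u w0 * w0 A"
      proof (rule sum_single_nz[OF S(2) w0(1)])
        fix w assume w: "w \<in> S" "w \<noteq> w0"
        show "u w * w A = 0"
        proof (rule ccontr)
          assume "u w * w A \<noteq> 0"
          hence uw: "u w \<noteq> 0" and wA: "w A \<noteq> 0" by auto
          have "wt (lead w) \<le> wt A" using lead_prop(2)[OF wE[OF w(1)] wA] .
          moreover have "wt A \<le> wt (lead w)" using mmin[OF w(1) uw] w0 A_def by simp
          ultimately have "wt (lead w) = wt A" by simp
          moreover have "finite (lead w)" "finite A"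
            using lead_KS[OF wE[OF w(1)]] lead_KS[OF wE[OF w0(1)]] KS_finite_mem A_def by auto
          ultimately have "lead w = lead w0" using wt_inj A_def by metis
          moreover obtain Aw Aw0 where "Aw \<in> initial L" "w = y Aw" "Aw0 \<in> initial L" "w0 = y Aw0"
            using S w w0 by blast
          ultimately show False using y w by metis
        qed
      qed
      moreover have "w0 A \<noteq> 0" unfolding A_def using lead_prop(1)[OF wE[OF w0(1)]] .
      ultimately show False using w0 by simp
    qed
  qed
  have "card ?Y = fvs.dim L" using fvs.basis_card_eq_dim[OF YL span indep] .
  thus ?thesis using card_image[OF inj] by simp
qed

locale msetup =
  fixes L :: "(nat set \<Rightarrow> 'a::field) set" and n k c :: nat
  assumes L_sub: "L \<subseteq> extpow n k" and L_sp: "fvs.subspace L"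
    and iso: "\<forall>x\<in>L. \<forall>y\<in>L. wedge x y = 0"
    and k1: "1 \<le> k" and kn: "2 * k < n" and cn: "c < n"
    and init: "initial L = {A \<in> KS {..<n} k. c \<in> A}"
begin

definition aa :: "(nat set \<Rightarrow> 'a) \<Rightarrow> nat set \<Rightarrow> 'a" where
  "aa x = (\<lambda>B. if c \<notin> B then shuffle_sign {c} B * x (insert c B) else 0)"

definition KB :: "nat set set" where "KB = KS ({..<n} - {c}) (k - 1)"

definition dl :: "nat set \<Rightarrow> nat set \<Rightarrow> 'a" where "dl B = (\<lambda>B'. if B' = B then 1 else 0)"

definition U :: "(nat set \<Rightarrow> 'a) set" where
  "U = {u \<in> extpow n (k - 1). \<forall>B. c \<in> B \<longrightarrow> u B = 0}"

lemma aa_supp: "x \<in> extpow n k \<Longrightarrow> aa x B \<noteq> 0 \<Longrightarrow> B \<in> KB"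
proof -
  assume x: "x \<in> extpow n k" and a: "aa x B \<noteq> 0"
  hence cB: "c \<notin> B" and xs: "x (insert c B) \<noteq> 0" unfolding aa_def by (auto split: if_splits)
  hence "insert c B \<subseteq> {..<n}" "card (insert c B) = k" using x unfolding extpow_def by auto
  moreover have "finite B" using calculation by (auto intro: finite_subset)
  ultimately show "B \<in> KB" unfolding KB_def KS_def using cB by auto
qed

lemma KB_ext: "B \<in> KB \<Longrightarrow> B \<subseteq> {..<n} \<and> c \<notin> B \<and> card B = k - 1 \<and> finite B"
  unfolding KB_def KS_def by (auto intro: finite_subset)

lemma aa_U: "x \<in> extpow n k \<Longrightarrow> aa x \<in> U"
proof -
  assume x: "x \<in> extpow n k"
  have "aa x \<in> extpow n (k - 1)" unfolding extpow_def
    using aa_supp[OF x] KB_ext by blast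
  moreover have "\<forall>B. c \<in> B \<longrightarrow> aa x B = 0" unfolding aa_def by auto
  ultimately show ?thesis unfolding U_def by auto
qed

lemma U_ext: "U \<subseteq> extpow n (k - 1)" unfolding U_def by auto

lemma U_sub: "fvs.subspace U"
  unfolding fvs.subspace_def
proof (intro conjI ballI allI)
  show "0 \<in> U" unfolding U_def extpow_def by simp
  fix x y assume x: "x \<in> U" and y: "y \<in> U"
  have xy: "x S \<noteq> 0 \<or> y S \<noteq> 0" if "(x + y) S \<noteq> 0" for S using that by auto
  have "(x + y) \<in> extpow n (k - 1)" unfolding extpow_def
  proof (intro CollectI allI impI)
    fix S assume "(x + y) S \<noteq> 0"
    thus "S \<subseteq> {..<n} \<and> card S = k - 1" using xy x y unfolding U_def extpow_def by blast
  qed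
  moreover have "\<forall>B. c \<in> B \<longrightarrow> (x + y) B = 0" using x y unfolding U_def by simp
  ultimately show "x + y \<in> U" unfolding U_def by simp
next
  fix r x assume x: "x \<in> U"
  thus "fscale r x \<in> U" unfolding U_def extpow_def fscale_def by auto
qed

lemma aa_zero: "aa 0 = 0" unfolding aa_def by (auto simp: fun_eq_iff)
lemma aa_add: "aa (x + y) = aa x + aa y" unfolding aa_def by (auto simp: fun_eq_iff algebra_simps)
lemma aa_diff: "aa (x - y) = aa x - aa y" unfolding aa_def by (auto simp: fun_eq_iff algebra_simps)
lemma aa_scale: "aa (fscale r x) = fscale r (aa x)" unfolding aa_def fscale_def by (auto simp: fun_eq_iff algebra_simps)

lemma lead_c: "x \<in> L \<Longrightarrow> x \<noteq> 0 \<Longrightarrow> c \<in> lead x"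
proof -
  assume "x \<in> L" "x \<noteq> 0"
  hence "lead x \<in> initial L" unfolding initial_def by auto
  thus "c \<in> lead x" using init by auto
qed

lemma aa_inj: "x \<in> L \<Longrightarrow> aa x = 0 \<Longrightarrow> x = 0"
proof (rule ccontr)
  assume x: "x \<in> L" and a: "aa x = 0" and nz: "x \<noteq> 0"
  define A where "A = lead x"
  have cA: "c \<in> A" using lead_c x nz A_def by simp
  have xE: "x \<in> extpow n k" using x L_sub by auto
  have "x A \<noteq> 0" using lead_prop(1)[OF xE nz] A_def by simp
  moreover have "insert c (A - {c}) = A" using cA by auto
  ultimately have "aa x (A - {c}) \<noteq> 0" unfolding aa_def using sign_nz by simp
  thus False using a by simp
qed

lemma dl_U: "B \<in> KB \<Longrightarrow> dl B \<in> U"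
proof -
  assume B: "B \<in> KB"
  have "dl B \<in> extpow n (k - 1)" using KB_ext[OF B] unfolding extpow_def dl_def by auto
  moreover have "\<forall>B'. c \<in> B' \<longrightarrow> dl B B' = 0" using KB_ext[OF B] unfolding dl_def by auto
  ultimately show ?thesis unfolding U_def by auto
qed

lemma exists_xb: "B \<in> KB \<Longrightarrow> \<exists>x\<in>L. aa x = dl B"
proof -
  assume B: "B \<in> KB"
  have "\<forall>A\<in>initial L. \<exists>x. x \<in> L \<and> x \<noteq> 0 \<and> lead x = A" unfolding initial_def by auto
  then obtain y where y: "\<And>A. A \<in> initial L \<Longrightarrow> y A \<in> L \<and> y A \<noteq> 0 \<and> lead (y A) = A" by metis
  define Ys where "Ys = (\<lambda>A. aa (y A)) ` initial L"
  have yE: "y A \<in> extpow n k" if "A \<in> initial L" for A using y[OF that] L_sub by auto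
  have leadY: "lead (aa (y A)) = A - {c}" and nzY: "aa (y A) (A - {c}) \<noteq> 0"
    if A: "A \<in> initial L" for A
  proof -
    have cA: "c \<in> A" using A init by auto
    have AK: "A \<in> KS {..<n} k" using A init by auto
    have fA: "finite A" using AK KS_finite_mem by blast
    have ins: "insert c (A - {c}) = A" using cA by auto
    have "y A A \<noteq> 0" using lead_prop(1)[OF yE[OF A]] y[OF A] by metis
    thus nz: "aa (y A) (A - {c}) \<noteq> 0" unfolding aa_def using ins sign_nz by simp
    have aE: "aa (y A) \<in> extpow n (k - 1)" using aa_U[OF yE[OF A]] U_ext by auto
    show "lead (aa (y A)) = A - {c}"
    proof (rule lead_eq[of "aa (y A)" n "k - 1", OF aE nz])
      fix T assume T: "aa (y A) T \<noteq> 0"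
      hence cT: "c \<notin> T" and yT: "y A (insert c T) \<noteq> 0" unfolding aa_def by (auto split: if_splits)
      have "wt (lead (y A)) \<le> wt (insert c T)" using lead_prop(2)[OF yE[OF A] _ yT] y[OF A] by auto
      hence "wt A \<le> wt (insert c T)" using y[OF A] by simp
      moreover have "finite T" using aa_supp[OF yE[OF A] T] KB_ext by blast
      moreover have "wt A = 2 ^ c + wt (A - {c})" using wt_insert[of "A - {c}" c] fA ins by simp
      ultimately show "wt (A - {c}) \<le> wt T" using cT by (simp add: wt_insert)
    qed
  qed
  have YsU: "Ys \<subseteq> U" unfolding Ys_def using aa_U yE by auto
  have spanU: "U \<subseteq> fvs.span Ys"
  proof (rule span_reduce[OF U_ext U_sub YsU])
    fix u assume u: "u \<in> U" "u \<noteq> 0"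
    have uE: "u \<in> extpow n (k - 1)" using u U_ext by auto
    define B' where "B' = lead u"
    have uB: "u B' \<noteq> 0" using lead_prop(1)[OF uE u(2)] B'_def by simp
    have cB: "c \<notin> B'" using uB u unfolding U_def by auto
    have BK: "B' \<in> KS {..<n} (k - 1)" using lead_KS[OF uE u(2)] B'_def by simp
    have fB: "finite B'" using BK KS_finite_mem by blast
    have "insert c B' \<in> KS {..<n} k" using BK cB fB cn k1 unfolding KS_def by auto
    hence A: "insert c B' \<in> initial L" using init by auto
    have "insert c B' - {c} = B'" using cB by auto
    hence "lead (aa (y (insert c B'))) = B'" "aa (y (insert c B')) B' \<noteq> 0"
      using leadY[OF A] nzY[OF A] by auto
    moreover have "aa (y (insert c B')) \<in> Ys" unfolding Ys_def using A by auto
    ultimately show "\<exists>z\<in>Ys. z \<noteq> 0 \<and> lead z = lead u" using B'_def by (metis zero_fun_apply)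
  qed
  have "dl B \<in> fvs.span Ys" using dl_U[OF B] spanU by auto
  moreover have "fvs.subspace {z. \<exists>x\<in>L. aa x = z}"
    unfolding fvs.subspace_def
  proof (intro conjI ballI allI)
    show "0 \<in> {z. \<exists>x\<in>L. aa x = z}" using fvs.subspace_0[OF L_sp] aa_zero by auto
    fix z1 z2 assume "z1 \<in> {z. \<exists>x\<in>L. aa x = z}" "z2 \<in> {z. \<exists>x\<in>L. aa x = z}"
    then obtain x1 x2 where "x1 \<in> L" "aa x1 = z1" "x2 \<in> L" "aa x2 = z2" by auto
    thus "z1 + z2 \<in> {z. \<exists>x\<in>L. aa x = z}" using fvs.subspace_add[OF L_sp] aa_add by blast
  next
    fix r z1 assume "z1 \<in> {z. \<exists>x\<in>L. aa x = z}"
    then obtain x1 where "x1 \<in> L" "aa x1 = z1" by auto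
    thus "fscale r z1 \<in> {z. \<exists>x\<in>L. aa x = z}" using fvs.subspace_scale[OF L_sp] aa_scale by blast
  qed
  moreover have "Ys \<subseteq> {z. \<exists>x\<in>L. aa x = z}" unfolding Ys_def using y by auto
  ultimately show "\<exists>x\<in>L. aa x = dl B" using fvs.span_minimal by blast
qed

end

lemma sum_two_nz:
  assumes "finite I" "a \<in> I" "b \<in> I" "a \<noteq> b" "\<And>i. i \<in> I \<Longrightarrow> i \<noteq> a \<Longrightarrow> i \<noteq> b \<Longrightarrow> f i = 0"
  shows "sum f I = f a + f b"
proof -
  have "sum f I = f a + sum f (I - {a})" using assms by (simp add: sum.remove)
  moreover have "sum f (I - {a}) = f b"
    using assms by (intro sum_single_nz) auto
  ultimately show ?thesis by simp
qed

locale msetup2 = msetup L n k c for L :: "(nat set \<Rightarrow> 'a::field) set" and n k c +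
  fixes xb :: "nat set \<Rightarrow> nat set \<Rightarrow> 'a"
  assumes xb: "\<And>B. B \<in> KB \<Longrightarrow> xb B \<in> L \<and> aa (xb B) = dl B"
begin

lemma xbE: "B \<in> KB \<Longrightarrow> xb B \<in> extpow n k" using xb L_sub by auto

lemma F1:
  assumes B: "B \<in> KB" and cS: "c \<in> S"
  shows "xb B S = (if S = insert c B then shuffle_sign {c} B else 0)"
proof -
  have ins: "insert c (S - {c}) = S" using cS by auto
  have "aa (xb B) (S - {c}) = dl B (S - {c})" using xb[OF B] by simp
  hence e: "shuffle_sign {c} (S - {c}) * xb B S = dl B (S - {c})" unfolding aa_def using ins by simp
  have sq: "shuffle_sign {c} (S - {c}) * shuffle_sign {c} (S - {c}) = (1::'a)" by (rule sign_sq)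
  have "xb B S = shuffle_sign {c} (S - {c}) * (shuffle_sign {c} (S - {c}) * xb B S)"
    using sq by (simp add: mult.assoc[symmetric])
  also have "\<dots> = shuffle_sign {c} (S - {c}) * dl B (S - {c})" using e by simp
  finally have e2: "xb B S = shuffle_sign {c} (S - {c}) * dl B (S - {c})" .
  have cB: "c \<notin> B" using KB_ext[OF B] by simp
  show ?thesis
  proof (cases "S = insert c B")
    case True
    hence "S - {c} = B" using cB by auto
    thus ?thesis using e2 True unfolding dl_def by simp
  next
    case False
    hence "S - {c} \<noteq> B" using ins by auto
    thus ?thesis using e2 False unfolding dl_def by simp
  qed
qed

lemma G1:
  assumes B: "B \<in> KB" and cD: "c \<notin> D" and nsub: "\<not> B \<subseteq> D"
  shows "xb B D = 0"
proof (rule ccontr)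
  assume nz: "xb B D \<noteq> 0"
  have DK: "D \<subseteq> {..<n}" "card D = k" using extpow_supp[OF xbE[OF B] nz] unfolding KS_def by auto
  have fD: "finite D" using DK by (auto intro: finite_subset)
  obtain b where b: "b \<in> B" "b \<notin> D" using nsub by auto
  have Bx: "B \<subseteq> {..<n}" "c \<notin> B" "card B = k - 1" "finite B" using KB_ext[OF B] by auto
  define Z where "Z = {..<n} - {c, b}"
  have bn: "b < n" using b Bx by auto
  have cb: "c \<noteq> b" using b Bx by auto
  have cZ: "card Z = n - 2" unfolding Z_def using bn cn cb by (simp add: card_Diff_subset)
  have DZ: "D \<subseteq> Z" unfolding Z_def using DK cD b by auto
  have "card (Z - D) = (n - 2) - k" using DZ cZ fD DK(2) by (simp add: card_Diff_subset)
  hence "k - 1 \<le> card (Z - D)" using kn by simp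
  then obtain E where E: "E \<subseteq> Z - D" "card E = k - 1" by (meson obtain_subset_with_card_n)
  have fE: "finite E" using E unfolding Z_def by (auto intro: finite_subset)
  define S where "S = D \<union> E"
  have fS: "finite S" unfolding S_def using fD fE by simp
  have EK: "E \<in> KB" unfolding KB_def KS_def using E unfolding Z_def by auto
  have cS: "c \<notin> S" "b \<notin> S" unfolding S_def using cD b E unfolding Z_def by auto
  let ?f = "\<lambda>A'. shuffle_sign A' (insert c S - A') * xb E A' * xb B (insert c S - A')"
  have "wedge (xb E) (xb B) (insert c S) = 0" using iso xb[OF B] xb[OF EK] by auto
  hence "(\<Sum>A'\<in>Pow (insert c S). ?f A') = 0" unfolding wedge_def using fS by simp
  moreover have "(\<Sum>A'\<in>Pow (insert c S). ?f A') = ?f (insert c E)"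
  proof (rule sum_single_nz)
    show "finite (Pow (insert c S))" using fS by simp
    show "insert c E \<in> Pow (insert c S)" unfolding S_def by auto
    fix A' assume A': "A' \<in> Pow (insert c S)" "A' \<noteq> insert c E"
    show "?f A' = 0"
    proof (cases "c \<in> A'")
      case True
      thus ?thesis using F1[OF EK True] A' by simp
    next
      case False
      hence "c \<in> insert c S - A'" by simp
      hence "xb B (insert c S - A') = (if insert c S - A' = insert c B then shuffle_sign {c} B else 0)"
        using F1[OF B] by simp
      moreover have "insert c S - A' \<noteq> insert c B"
      proof
        assume h: "insert c S - A' = insert c B"
        have "b \<in> insert c B" using b by simp
        hence "b \<in> insert c S" using h by (metis DiffD1)
        thus False using cS cb by simp
      qed
      ultimately show ?thesis by simp
    qed
  qed
  moreover have "insert c S - insert c E = D" unfolding S_def using cS E cD by auto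
  moreover have "xb E (insert c E) = shuffle_sign {c} E" using F1[OF EK] by simp
  ultimately have "shuffle_sign (insert c E) D * shuffle_sign {c} E * xb B D = 0" by simp
  moreover have "shuffle_sign (insert c E) D \<noteq> (0::'a)" "shuffle_sign {c} E \<noteq> (0::'a)" by (rule sign_nz)+
  ultimately show False using nz by simp
qed

lemma G2:
  assumes B: "B \<in> KB" and C: "C \<in> KB" and d: "B \<inter> C = {}" and j: "j < n" "j \<noteq> c" "j \<notin> B" "j \<notin> C"
  shows "shuffle_sign (insert c B) (insert j C) * shuffle_sign {c} B * xb C (insert j C)
       + shuffle_sign (insert j B) (insert c C) * xb B (insert j B) * shuffle_sign {c} C = 0"
proof -
  have Bx: "c \<notin> B" "finite B" and Cx: "c \<notin> C" "finite C" using KB_ext[OF B] KB_ext[OF C] by auto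
  define S where "S = insert j (B \<union> C)"
  have fS: "finite S" unfolding S_def using Bx Cx by simp
  have cS: "c \<notin> S" unfolding S_def using Bx Cx j by auto
  let ?f = "\<lambda>A'. shuffle_sign A' (insert c S - A') * xb B A' * xb C (insert c S - A')"
  have "wedge (xb B) (xb C) (insert c S) = 0" using iso xb[OF B] xb[OF C] by auto
  hence "(\<Sum>A'\<in>Pow (insert c S). ?f A') = 0" unfolding wedge_def using fS by simp
  moreover have "(\<Sum>A'\<in>Pow (insert c S). ?f A') = ?f (insert c B) + ?f (insert j B)"
  proof (rule sum_two_nz)
    show "finite (Pow (insert c S))" using fS by simp
    show "insert c B \<in> Pow (insert c S)" "insert j B \<in> Pow (insert c S)" unfolding S_def by auto
    show "insert c B \<noteq> insert j B" using Bx j by auto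
    fix A' assume A': "A' \<in> Pow (insert c S)" "A' \<noteq> insert c B" "A' \<noteq> insert j B"
    show "?f A' = 0"
    proof (cases "c \<in> A'")
      case True
      thus ?thesis using F1[OF B True] A' by simp
    next
      case False
      hence "c \<in> insert c S - A'" by simp
      hence "xb C (insert c S - A') = (if insert c S - A' = insert c C then shuffle_sign {c} C else 0)"
        using F1[OF C] by simp
      moreover have "insert c S - A' \<noteq> insert c C"
      proof
        assume h: "insert c S - A' = insert c C"
        have "A' = insert c S - (insert c S - A')" using A'(1) by auto
        also have "\<dots> = insert c S - insert c C" using h by simp
        also have "\<dots> = insert j B" unfolding S_def using d j Cx Bx by auto
        finally have "A' = insert j B" .
        thus False using A' by simp
      qed
      ultimately show ?thesis by simp
    qed
  qed
  moreover have "insert c S - insert c B = insert j C" unfolding S_def using cS d j Bx Cx by auto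
  moreover have "insert c S - insert j B = insert c C" unfolding S_def using cS d j Bx Cx by auto
  moreover have "xb B (insert c B) = shuffle_sign {c} B" using F1[OF B] by simp
  moreover have "xb C (insert c C) = shuffle_sign {c} C" using F1[OF C] by simp
  ultimately show ?thesis by simp
qed

end

context msetup2 begin

definition uu :: "nat set \<Rightarrow> nat \<Rightarrow> 'a" where
  "uu B j = shuffle_sign {j} B * xb B (insert j B)"

lemma uu_eq:
  assumes B: "B \<in> KB" and C: "C \<in> KB" and d: "B \<inter> C = {}" and j: "j < n" "j \<noteq> c" "j \<notin> B" "j \<notin> C"
  shows "uu B j = uu C j"
proof -
  have Bx: "c \<notin> B" "finite B" "card B = k - 1" and Cx: "c \<notin> C" "finite C" "card C = k - 1"
    using KB_ext[OF B] KB_ext[OF C] by auto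
  have tB: "xb B (insert j B) = shuffle_sign {j} B * uu B j"
    unfolding uu_def by (simp add: mult.assoc[symmetric] sign_sq)
  have tC: "xb C (insert j C) = shuffle_sign {j} C * uu C j"
    unfolding uu_def by (simp add: mult.assoc[symmetric] sign_sq)
  define K1 where "K1 = shuffle_sign (insert c B) (insert j C) * shuffle_sign {c} B * (shuffle_sign {j} C :: 'a)"
  define K2 where "K2 = shuffle_sign (insert j B) (insert c C) * shuffle_sign {c} C * (shuffle_sign {j} B :: 'a)"
  have K: "K1 = - K2" unfolding K1_def K2_def
    using sign_id1[OF Bx(2) Cx(2) d _ Bx(1) Cx(1) j(3) j(4)] j(2) Bx(3) Cx(3) by simp
  have K2nz: "K2 \<noteq> 0" unfolding K2_def using sign_nz[where 'a='a] by simp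
  have "K1 * uu C j + K2 * uu B j = 0"
    using G2[OF B C d j] unfolding K1_def K2_def tB tC by (simp add: algebra_simps)
  hence "K2 * (uu B j - uu C j) = 0" using K by (simp add: algebra_simps)
  thus ?thesis using K2nz by simp
qed

definition Yj :: "nat \<Rightarrow> nat set" where "Yj j = {..<n} - {c, j}"

definition B0 :: "nat \<Rightarrow> nat set" where "B0 j = (SOME B. B \<in> KS (Yj j) (k - 1))"

lemma Yj_card: "j < n \<Longrightarrow> j \<noteq> c \<Longrightarrow> card (Yj j) = n - 2"
  unfolding Yj_def using cn by (simp add: card_Diff_subset)

lemma B0_in: "j < n \<Longrightarrow> j \<noteq> c \<Longrightarrow> B0 j \<in> KS (Yj j) (k - 1)"
proof -
  assume j: "j < n" "j \<noteq> c"
  have "k - 1 \<le> card (Yj j)" using Yj_card[OF j] kn by simp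
  then obtain B where "B \<subseteq> Yj j" "card B = k - 1" by (meson obtain_subset_with_card_n)
  hence "\<exists>B. B \<in> KS (Yj j) (k - 1)" unfolding KS_def by auto
  thus ?thesis unfolding B0_def by (rule someI_ex)
qed

lemma KS_Yj: "B \<in> KS (Yj j) (k - 1) \<longleftrightarrow> B \<in> KB \<and> j \<notin> B"
  unfolding KS_def KB_def Yj_def by auto

lemma uu_const:
  assumes j: "j < n" "j \<noteq> c" and B: "B \<in> KB" "j \<notin> B"
  shows "uu B j = uu (B0 j) j"
proof -
  define Q where "Q = {B \<in> KS (Yj j) (k - 1). uu B j = uu (B0 j) j}"
  have fY: "finite (Yj j)" unfolding Yj_def by simp
  have r: "2 * (k - 1) < card (Yj j)" using Yj_card[OF j] kn k1 by simp
  have Qs: "Q \<subseteq> KS (Yj j) (k - 1)" unfolding Q_def by auto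
  have cl: "X' \<in> Q" if "X \<in> Q" "X' \<in> KS (Yj j) (k - 1)" "X \<inter> X' = {}" for X X'
  proof -
    have X: "X \<in> KB" "j \<notin> X" and X': "X' \<in> KB" "j \<notin> X'" using that KS_Yj unfolding Q_def by auto
    have "uu X j = uu X' j" using uu_eq[OF X(1) X'(1) that(3) j X(2) X'(2)] .
    thus ?thesis using that unfolding Q_def by auto
  qed
  have b0: "B0 j \<in> Q" unfolding Q_def using B0_in[OF j] by simp
  have "KS (Yj j) (k - 1) \<subseteq> Q"
  proof (rule kneser_conn[OF fY r Qs])
    fix X X' assume "X \<in> Q" "X' \<in> KS (Yj j) (k - 1)" "X \<inter> X' = {}"
    thus "X' \<in> Q" by (rule cl)
  next
    show "B0 j \<in> Q" by (rule b0)
  qed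
  moreover have "B \<in> KS (Yj j) (k - 1)" using B KS_Yj by simp
  ultimately show ?thesis unfolding Q_def by auto
qed

definition vv :: "nat \<Rightarrow> 'a" where
  "vv j = (if j = c then 1 else if j < n then uu (B0 j) j else 0)"

lemma H:
  assumes B: "B \<in> KB" and j: "j \<notin> B"
  shows "xb B (insert j B) = shuffle_sign {j} B * vv j"
proof -
  have Bx: "c \<notin> B" "finite B" "B \<subseteq> {..<n}" using KB_ext[OF B] by auto
  show ?thesis
  proof (cases "j = c")
    case True thus ?thesis using F1[OF B] unfolding vv_def by simp
  next
    case jc: False
    show ?thesis
    proof (cases "j < n")
      case True
      have "uu B j = vv j" unfolding vv_def using uu_const[OF True jc B j] jc True by simp
      hence e: "shuffle_sign {j} B * xb B (insert j B) = vv j" unfolding uu_def .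
      have sq: "shuffle_sign {j} B * shuffle_sign {j} B = (1::'a)" by (rule sign_sq)
      have "xb B (insert j B) = shuffle_sign {j} B * (shuffle_sign {j} B * xb B (insert j B))"
        using sq by (simp add: mult.assoc[symmetric])
      thus ?thesis using e by simp
    next
      case False
      have "xb B (insert j B) = 0"
      proof (rule ccontr)
        assume "xb B (insert j B) \<noteq> 0"
        hence "insert j B \<subseteq> {..<n}" using extpow_supp[OF xbE[OF B]] unfolding KS_def by blast
        thus False using False by auto
      qed
      thus ?thesis unfolding vv_def using False jc by simp
    qed
  qed
qed

lemma Z:
  assumes B: "B \<in> KB" and nf: "\<not> (\<exists>j. j \<notin> B \<and> R = insert j B)"
  shows "xb B R = 0"
proof (cases "c \<in> R")
  case True
  have "c \<notin> B" using KB_ext[OF B] by simp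
  hence "R \<noteq> insert c B" using nf by blast
  thus ?thesis using F1[OF B True] by simp
next
  case False
  show ?thesis
  proof (rule ccontr)
    assume nz: "xb B R \<noteq> 0"
    have RK: "R \<subseteq> {..<n}" "card R = k" using extpow_supp[OF xbE[OF B] nz] unfolding KS_def by auto
    have fR: "finite R" using RK by (auto intro: finite_subset)
    have BR: "B \<subseteq> R" using G1[OF B False] nz by blast
    have Bx: "card B = k - 1" "finite B" using KB_ext[OF B] by auto
    have "card (R - B) = 1" using BR RK Bx k1 fR by (simp add: card_Diff_subset)
    then obtain j where "R - B = {j}" by (rule card_1_singletonE)
    hence "j \<notin> B" "R = insert j B" using BR by auto
    thus False using nf by blast
  qed
qed

definition vec :: "nat set \<Rightarrow> 'a" where
  "vec S = (if is_singleton S then vv (the_elem S) else 0)"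

lemma vec_single[simp]: "vec {j} = vv j" unfolding vec_def by simp

lemma vec_nz: "vec A \<noteq> 0 \<Longrightarrow> \<exists>s. A = {s}"
  unfolding vec_def by (auto simp: is_singleton_def split: if_splits)

lemma wedge_vec_xb:
  assumes B: "B \<in> KB"
  shows "wedge vec (xb B) = 0"
proof
  fix S
  show "wedge vec (xb B) S = 0 S"
  proof (cases "finite S")
    case False thus ?thesis unfolding wedge_def by simp
  next
    case fS: True
    have Bx: "finite B" using KB_ext[OF B] by simp
    let ?f = "\<lambda>A. shuffle_sign A (S - A) * vec A * xb B (S - A)"
    have key: "\<exists>p q. p \<notin> B \<and> q \<notin> B \<and> p \<noteq> q \<and> S = insert p (insert q B) \<and> A = {p}"
      if nz: "?f A \<noteq> 0" and AS: "A \<subseteq> S" for A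
    proof -
      have "vec A \<noteq> 0" using nz by auto
      then obtain s where s: "A = {s}" using vec_nz by blast
      have "xb B (S - {s}) \<noteq> 0" using nz s by auto
      then obtain q where q: "q \<notin> B" "S - {s} = insert q B" using Z[OF B] by blast
      have sS: "s \<in> S" using AS s by auto
      have "s \<notin> insert q B" using q(2) by auto
      hence "s \<notin> B" "s \<noteq> q" by auto
      moreover have "S = insert s (insert q B)" using q(2) sS by auto
      ultimately show ?thesis using q(1) s by blast
    qed
    show ?thesis
    proof (cases "\<exists>p q. p \<notin> B \<and> q \<notin> B \<and> p \<noteq> q \<and> S = insert p (insert q B)")
      case True
      then obtain p q where pq: "p \<notin> B" "q \<notin> B" "p \<noteq> q" "S = insert p (insert q B)" by blast
      have "wedge vec (xb B) S = (\<Sum>A\<in>Pow S. ?f A)" unfolding wedge_def using fS by simp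
      also have "\<dots> = ?f {p} + ?f {q}"
      proof (rule sum_two_nz)
        show "finite (Pow S)" using fS by simp
        show "{p} \<in> Pow S" "{q} \<in> Pow S" "{p} \<noteq> {q}" using pq by auto
        fix A assume A: "A \<in> Pow S" "A \<noteq> {p}" "A \<noteq> {q}"
        show "?f A = 0"
        proof (rule ccontr)
          assume "?f A \<noteq> 0"
          moreover have "A \<subseteq> S" using A by auto
          ultimately obtain p' q' where pq': "p' \<notin> B" "q' \<notin> B" "p' \<noteq> q'" "S = insert p' (insert q' B)" "A = {p'}"
            using key by blast
          have "p' \<in> S" using pq' by simp
          hence "p' = p \<or> p' = q" using pq pq' by auto
          thus False using A pq' by auto
        qed
      qed
      also have "S - {p} = insert q B" using pq by auto
      also have "S - {q} = insert p B" using pq by auto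
      finally have "wedge vec (xb B) S =
          shuffle_sign {p} (insert q B) * vv p * (shuffle_sign {q} B * vv q) +
          shuffle_sign {q} (insert p B) * vv q * (shuffle_sign {p} B * vv p)"
        using H[OF B pq(1)] H[OF B pq(2)] by simp
      also have "\<dots> = vv p * vv q * (shuffle_sign {p} (insert q B) * shuffle_sign {q} B +
                                      shuffle_sign {q} (insert p B) * shuffle_sign {p} B)"
        by (simp add: algebra_simps)
      also have "\<dots> = 0" using sign_id2[OF Bx pq(3) pq(1) pq(2), where 'a='a] by simp
      finally show ?thesis by simp
    next
      case False
      have "wedge vec (xb B) S = (\<Sum>A\<in>Pow S. ?f A)" unfolding wedge_def using fS by simp
      also have "\<dots> = 0"
      proof (rule sum.neutral, rule ballI)
        fix A assume AP: "A \<in> Pow S"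
        show "?f A = 0"
        proof (rule ccontr)
          assume "?f A \<noteq> 0"
          moreover have "A \<subseteq> S" using AP by auto
          ultimately show False using key False by blast
        qed
      qed
      finally show ?thesis by simp
    qed
  qed
qed

end

lemma wedge_sum_right:
  assumes "finite I"
  shows "wedge v (\<Sum>i\<in>I. fscale (r i) (f i)) S = (\<Sum>i\<in>I. r i * wedge v (f i) S)"
proof (cases "finite S")
  case False thus ?thesis unfolding wedge_def by simp
next
  case True
  have "wedge v (\<Sum>i\<in>I. fscale (r i) (f i)) S =
        (\<Sum>A\<in>Pow S. shuffle_sign A (S - A) * v A * (\<Sum>i\<in>I. r i * f i (S - A)))"
    unfolding wedge_def using True by (simp add: sum_fun_apply fscale_def)
  also have "\<dots> = (\<Sum>A\<in>Pow S. \<Sum>i\<in>I. r i * (shuffle_sign A (S - A) * v A * f i (S - A)))"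
    by (simp add: sum_distrib_left mult_ac)
  also have "\<dots> = (\<Sum>i\<in>I. \<Sum>A\<in>Pow S. r i * (shuffle_sign A (S - A) * v A * f i (S - A)))"
    by (rule sum.swap)
  also have "\<dots> = (\<Sum>i\<in>I. r i * wedge v (f i) S)"
    unfolding wedge_def using True by (simp add: sum_distrib_left)
  finally show ?thesis .
qed

context msetup begin

lemma finite_KB: "finite KB" unfolding KB_def by (rule finite_KS) simp

lemma aa_sum: "aa (\<Sum>B\<in>I. fscale (r B) (f B)) T = (\<Sum>B\<in>I. r B * aa (f B) T)"
  unfolding aa_def by (simp add: sum_fun_apply fscale_def sum_distrib_left mult_ac)

end

context msetup2 begin

lemma wedge_vec_L:
  assumes x: "x \<in> L"
  shows "wedge vec x = 0"
proof -
  define s where "s = (\<Sum>B\<in>KB. fscale (aa x B) (xb B))"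
  have sL: "s \<in> L" unfolding s_def
    using xb by (intro fvs.subspace_sum[OF L_sp] fvs.subspace_scale[OF L_sp]) auto
  have xE: "x \<in> extpow n k" using x L_sub by auto
  have "aa (x - s) = 0"
  proof
    fix T
    have "aa s T = (\<Sum>B\<in>KB. aa x B * aa (xb B) T)" unfolding s_def by (rule aa_sum)
    also have "\<dots> = (\<Sum>B\<in>KB. aa x B * dl B T)" using xb by simp
    also have "\<dots> = aa x T"
    proof (cases "T \<in> KB")
      case True
      have "(\<Sum>B\<in>KB. aa x B * dl B T) = aa x T * dl T T"
        by (rule sum_single_nz[OF finite_KB True]) (auto simp: dl_def)
      thus ?thesis by (simp add: dl_def)
    next
      case False
      hence "aa x T = 0" using aa_supp[OF xE] by blast
      moreover have "(\<Sum>B\<in>KB. aa x B * dl B T) = 0"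
        using False by (intro sum.neutral) (auto simp: dl_def)
      ultimately show ?thesis by simp
    qed
    finally show "aa (x - s) T = 0 T" by (simp add: aa_diff)
  qed
  hence "x - s = 0" using aa_inj fvs.subspace_diff[OF L_sp x sL] by blast
  hence xs: "x = s" by simp
  show ?thesis
  proof
    fix S
    have "wedge vec s S = (\<Sum>B\<in>KB. aa x B * wedge vec (xb B) S)"
      unfolding s_def by (rule wedge_sum_right[OF finite_KB])
    hence "wedge vec x S = (\<Sum>B\<in>KB. aa x B * wedge vec (xb B) S)" using xs by simp
    also have "\<dots> = 0" using wedge_vec_xb by simp
    finally show "wedge vec x S = 0 S" by simp
  qed
qed

lemma vec_ext: "vec \<in> extpow n 1"
  unfolding extpow_def
proof (intro CollectI allI impI)
  fix S assume nz: "vec S \<noteq> 0"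
  then obtain s where s: "S = {s}" using vec_nz by blast
  have "vv s \<noteq> 0" using nz s by simp
  hence "s < n" unfolding vv_def using cn by (auto split: if_splits)
  thus "S \<subseteq> {..<n} \<and> card S = 1" using s by simp
qed

lemma vec_nonzero: "vec \<noteq> 0"
proof
  assume "vec = 0"
  hence "vec {c} = 0" by simp
  thus False unfolding vec_single vv_def by simp
qed

end

context msetup begin

lemma result: "\<exists>v\<in>extpow n 1. v \<noteq> 0 \<and> (\<forall>x\<in>L. wedge v x = 0)"
proof -
  have "\<forall>B\<in>KB. \<exists>x. x \<in> L \<and> aa x = dl B" using exists_xb by blast
  then obtain xb where xb: "\<And>B. B \<in> KB \<Longrightarrow> xb B \<in> L \<and> aa (xb B) = dl B" by metis
  interpret m2: msetup2 L n k c xb by unfold_locales (rule xb)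
  show ?thesis using m2.vec_ext m2.vec_nonzero m2.wedge_vec_L by blast
qed

end

theorem corollary1p6:
  fixes L :: "(nat set \<Rightarrow> 'a::field) set" and n k :: nat
  assumes char_not_2: "(2::'a) \<noteq> 0"
    and k_lt: "2 * k < n"
    and L_sub: "L \<subseteq> extpow n k"
    and L_subspace: "fvs.subspace L"
    and isotropic: "\<forall>x\<in>L. \<forall>y\<in>L. wedge x y = 0"
    and dimL: "fvs.dim L = (n - 1) choose (k - 1)"
  shows "\<exists>v \<in> extpow n 1. v \<noteq> 0 \<and> (\<forall>x\<in>L. wedge v x = 0)"
proof -
  have I: "intersecting (initial L)" by (rule initial_intersecting[OF L_sub isotropic])
  have FK: "initial L \<subseteq> KS {..<n} k" by (rule initial_KS[OF L_sub])
  have cF: "card (initial L) = (n - 1) choose (k - 1)"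
    using card_initial[OF L_sub L_subspace] dimL by simp
  show ?thesis
  proof (cases "k = 0")
    case True
    have "initial L \<subseteq> {{}}"
    proof
      fix A assume "A \<in> initial L"
      hence "A \<subseteq> {..<n}" "card A = 0" using FK True unfolding KS_def by auto
      moreover hence "finite A" by (auto intro: finite_subset)
      ultimately show "A \<in> {{}}" by simp
    qed
    hence "initial L = {}" using intersecting_empty[OF I] by auto
    hence False using cF True by simp
    thus ?thesis ..
  next
    case False
    hence k1: "1 \<le> k" by simp
    obtain c where c: "\<forall>A\<in>initial L. c \<in> A" using ekr_unique[OF FK I k1 k_lt cF] by blast
    have "0 < (n - 1) choose (k - 1)" using k_lt by simp
    hence "initial L \<noteq> {}" using cF by auto
    then obtain A where A: "A \<in> initial L" by blast
    have cn: "c < n" using A c FK unfolding KS_def by auto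
    have sub: "initial L \<subseteq> {A \<in> KS {..<n} k. c \<in> A}" using FK c by auto
    have "card {A \<in> KS {..<n} k. c \<in> A} = (n - 1) choose (k - 1)"
      using card_KS_star[of "{..<n}" c k] cn k1 by simp
    hence init: "initial L = {A \<in> KS {..<n} k. c \<in> A}"
      using sub cF by (intro card_subset_eq) (auto intro: finite_subset finite_KS)
    interpret m: msetup L n k c
      by unfold_locales (use L_sub L_subspace isotropic k1 k_lt cn init in auto)
    show ?thesis by (rule m.result)
  qed
qed

end
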